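(* Let $Y_1,Y_2$ be compact, semi-locally simply connected length spaces and let $r=\min\{r(Y_1)/20,\ r(Y_2)/20\}$. If $d_{GH}(Y_1,Y_2)\le r$, then $\pi_1(Y_1)$ is isomorphic to $\pi_1(Y_2)$.
   Context: A space $Y$ is semi-locally simply connected if every point has a neighborhood $U$ such that every loop in $U$ is null-homotopic in $Y$. For a metric space $Y$, $r(Y)$ is the supremum of all $r>0$ such that every closed curve contained in a ball of radius $r$ in $Y$ is null-homotopic in $Y$. $d_{GH}$ is the Gromov–Hausdorff distance. *)

theory Defs
  imports "HOL-Analysis.Analysis" "HOL-Algebra.Group"
begin

definition curve_length :: "(real \<Rightarrow> 'a::metric_space) \<Rightarrow> ereal" where
  "curve_length g =
     (SUP p \<in> {(n::nat, t::nat \<Rightarrow> real). t 0 = 0 \<and> t n = 1 \<and> (\<forall>i<n. t i \<le> t (Suc i))}.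
        ereal (\<Sum>i<fst p. dist (g (snd p i)) (g (snd p (Suc i)))))"

definition length_space :: "'a::metric_space set \<Rightarrow> bool" where
  "length_space S \<longleftrightarrow>
     (\<forall>x\<in>S. \<forall>y\<in>S. ereal (dist x y) =
        (INF g \<in> {g. path g \<and> path_image g \<subseteq> S \<and> pathstart g = x \<and> pathfinish g = y}.
           curve_length g))"

definition semilocally_simply_connected :: "'a::topological_space set \<Rightarrow> bool" where
  "semilocally_simply_connected S \<longleftrightarrow>
     (\<forall>y\<in>S. \<exists>U. openin (top_of_set S) U \<and> y \<in> U \<and>
        (\<forall>g. path g \<and> pathfinish g = pathstart g \<and> path_image g \<subseteq> U
             \<longrightarrow> homotopic_loops S g (\<lambda>t. pathstart g)))"

definition r_of :: "'a::metric_space set \<Rightarrow> ereal" where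
  "r_of S = Sup {ereal r | r. r > 0 \<and>
      (\<forall>x\<in>S. \<forall>g. path g \<and> pathfinish g = pathstart g \<and> path_image g \<subseteq> {z\<in>S. dist x z < r}
          \<longrightarrow> homotopic_loops S g (\<lambda>t. pathstart g))}"

definition hausdorff_dist_wrt :: "('c \<Rightarrow> 'c \<Rightarrow> real) \<Rightarrow> 'c set \<Rightarrow> 'c set \<Rightarrow> real" where
  "hausdorff_dist_wrt d A B =
     max (SUP x\<in>A. INF y\<in>B. d x y) (SUP y\<in>B. INF x\<in>A. d x y)"

definition GH_dist :: "'a::metric_space set \<Rightarrow> 'b::metric_space set \<Rightarrow> real" where
  "GH_dist S T = Inf {hausdorff_dist_wrt d (Inl ` S) (Inr ` T) | d.
      Metric_space (Inl ` S \<union> Inr ` T) d \<and>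
      (\<forall>x\<in>S. \<forall>y\<in>S. d (Inl x) (Inl y) = dist x y) \<and>
      (\<forall>x\<in>T. \<forall>y\<in>T. d (Inr x) (Inr y) = dist x y)}"

definition fundamental_group :: "'a::topological_space set \<Rightarrow> 'a \<Rightarrow> (real \<Rightarrow> 'a) set monoid" where
  "fundamental_group S a =
     \<lparr> carrier = {Collect (homotopic_paths S p) | p.
                    path p \<and> path_image p \<subseteq> S \<and> pathstart p = a \<and> pathfinish p = a},
       mult = (\<lambda>X Y. {r. \<exists>p\<in>X. \<exists>q\<in>Y. homotopic_paths S (p +++ q) r}),
       one = Collect (homotopic_paths S (\<lambda>t. a)) \<rparr>"

end

theory Submission
  imports Defs
begin

definition cp :: "'a \<Rightarrow> real \<Rightarrow> 'a" where "cp a = (\<lambda>t. a)"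

definition sp :: "real \<Rightarrow> real \<Rightarrow> (real \<Rightarrow> 'a) \<Rightarrow> real \<Rightarrow> 'a" where
  "sp a b g = (\<lambda>x. g ((b - a) * x + a))"

lemma path_cp[simp]: "path (cp a)" by (simp add: cp_def path_def)
lemma cp_simps[simp]: "pathstart (cp a) = a" "pathfinish (cp a) = a" "path_image (cp a) = {a}"
  "reversepath (cp a) = cp a"
  by (auto simp: cp_def pathstart_def pathfinish_def path_image_def reversepath_def)

lemma hp_rid:
  assumes "path p" "path_image p \<subseteq> S"
  shows "homotopic_paths S (p +++ cp (pathfinish p)) p"
proof -
  have \<section>: "continuous_on {0..1} (\<lambda>t::real. if t \<le> 1/2 then 2 *\<^sub>R t else 1)"
    unfolding split_01
    by (rule continuous_on_cases continuous_intros | force simp: pathfinish_def joinpaths_def)+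
  show ?thesis
    apply (rule homotopic_paths_sym)
    using assms unfolding pathfinish_def joinpaths_def cp_def
    by (intro \<section> continuous_on_cases continuous_intros homotopic_paths_reparametrize [where f = "\<lambda>t. if t \<le> 1/2 then 2 *\<^sub>R t else 1"]; force)
qed

lemma hp_lid:
  assumes "path p" "path_image p \<subseteq> S"
  shows "homotopic_paths S (cp (pathstart p) +++ p) p"
proof -
  have \<section>: "continuous_on {0..1} (\<lambda>t::real. if t \<le> 1/2 then 0 else 2 * t - 1)"
    unfolding split_01
    by (rule continuous_on_cases continuous_intros | force simp: pathfinish_def joinpaths_def)+
  show ?thesis
    apply (rule homotopic_paths_sym)
    using assms unfolding pathstart_def joinpaths_def cp_def
    by (intro \<section> continuous_on_cases continuous_intros homotopic_paths_reparametrize [where f = "\<lambda>t. if t \<le> 1/2 then 0 else 2 * t - 1"]; force)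
qed

lemma hp_rinv:
  assumes "path p" "path_image p \<subseteq> S"
    shows "homotopic_paths S (p +++ reversepath p) (cp (pathstart p))"
proof -
  have p: "continuous_on {0..1} p" 
    using assms by (auto simp: path_def)
  let ?A = "{0..1} \<times> {0..1}"
  have "continuous_on ?A (\<lambda>x. (sp 0 (fst x) p +++ reversepath (sp 0 (fst x) p)) (snd x))"
    unfolding joinpaths_def sp_def reversepath_def path_def add_0_right diff_0_right
  proof (rule continuous_on_cases_le)
    show "continuous_on {x \<in> ?A. snd x \<le> 1/2} (\<lambda>t. p (fst t * (2 * snd t)))"
         "continuous_on {x \<in> ?A. 1/2 \<le> snd x} (\<lambda>t. p (fst t * (1 - (2 * snd t - 1))))"
         "continuous_on ?A snd"
      by (intro continuous_on_compose2 [OF p] continuous_intros; auto simp: mult_le_one)+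
  qed (auto simp: algebra_simps)
  then show ?thesis
    using assms
    apply (subst homotopic_paths_sym_eq)
    unfolding homotopic_paths_def homotopic_with_def
    apply (rule_tac x="(\<lambda>y. (sp 0 (fst y) p +++ reversepath(sp 0 (fst y) p)) (snd y))" in exI)
    apply (force simp: mult_le_one path_defs joinpaths_def sp_def reversepath_def cp_def)
    done
qed

lemma hp_linv:
  assumes "path p" "path_image p \<subseteq> S"
    shows "homotopic_paths S (reversepath p +++ p) (cp (pathfinish p))"
  using hp_rinv [of "reversepath p" S] assms by simp

lemma hl_imp_hp_null:
  assumes "homotopic_loops S p (cp a)"
    shows "homotopic_paths S p (cp (pathstart p))"
proof -
  have "path p" by (metis assms homotopic_loops_imp_path)
  have ploop: "pathfinish p = pathstart p" by (metis assms homotopic_loops_imp_loop)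
  have pip: "path_image p \<subseteq> S" by (metis assms homotopic_loops_imp_subset)
  let ?A = "{0..1::real} \<times> {0..1::real}"
  obtain h where conth: "continuous_on ?A h"
             and hs: "h \<in> ?A \<rightarrow> S"
             and h0[simp]: "\<And>x. x \<in> {0..1} \<Longrightarrow> h(0,x) = p x"
             and h1[simp]: "\<And>x. x \<in> {0..1} \<Longrightarrow> h(1,x) = a"
             and ends: "\<And>t. t \<in> {0..1} \<Longrightarrow> pathfinish (h \<circ> Pair t) = pathstart (h \<circ> Pair t)"
    using assms by (auto simp: homotopic_loops homotopic_with image_subset_iff_funcset cp_def)
  have conth0: "path (\<lambda>u. h (u, 0))"
    unfolding path_def
  proof (rule continuous_on_compose [of _ _ h, unfolded o_def])
    show "continuous_on ((\<lambda>x. (x, 0)) ` {0..1}) h"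
      by (force intro: continuous_on_subset [OF conth])
  qed (force intro: continuous_intros)
  have pih0: "path_image (\<lambda>u. h (u, 0)) \<subseteq> S"
    using hs by (force simp: path_image_def)
  have c1: "continuous_on ?A (\<lambda>x. h (fst x * snd x, 0))"
  proof (rule continuous_on_compose [of _ _ h, unfolded o_def])
    show "continuous_on ((\<lambda>x. (fst x * snd x, 0)) ` ?A) h"
      by (force simp: mult_le_one intro: continuous_on_subset [OF conth])
  qed (force intro: continuous_intros)+
  have c2: "continuous_on ?A (\<lambda>x. h (fst x - fst x * snd x, 0))"
  proof (rule continuous_on_compose [of _ _ h, unfolded o_def])
    show "continuous_on ((\<lambda>x. (fst x - fst x * snd x, 0)) ` ?A) h"
      by (auto simp: algebra_simps add_increasing2 mult_left_le intro: continuous_on_subset [OF conth])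
  qed (force intro: continuous_intros)
  have [simp]: "\<And>t. \<lbrakk>0 \<le> t \<and> t \<le> 1\<rbrakk> \<Longrightarrow> h (t, 1) = h (t, 0)"
    using ends by (simp add: pathfinish_def pathstart_def)
  have adhoc_le: "c * 4 \<le> 1 + c * (d * 4)" if "\<not> d * 4 \<le> 3" "0 \<le> c" "c \<le> 1" for c d::real
  proof -
    have "c * 3 \<le> c * (d * 4)" using that less_eq_real_def by auto
    with \<open>c \<le> 1\<close> show ?thesis by fastforce
  qed
  have *: "\<And>p x. \<lbrakk>path p \<and> path(reversepath p);
                  path_image p \<subseteq> S \<and> path_image(reversepath p) \<subseteq> S;
                  pathfinish p = pathstart(cp a +++ reversepath p) \<and>
                   pathstart(reversepath p) = a \<and> pathstart p = x\<rbrakk>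
                  \<Longrightarrow> homotopic_paths S (p +++ cp a +++ reversepath p) (cp x)"
    by (metis hp_lid homotopic_paths_join
              homotopic_paths_trans homotopic_paths_sym hp_rinv)
  have 1: "homotopic_paths S p (p +++ cp (pathfinish p))"
    using \<open>path p\<close> hp_rid homotopic_paths_sym pip by blast
  moreover have "homotopic_paths S (p +++ cp (pathfinish p))
                                   (cp (pathstart p) +++ p +++ cp (pathfinish p))"
    using hp_lid [of "p +++ cp (pathfinish p)" S]
    by (metis 1 homotopic_paths_imp_path homotopic_paths_imp_subset homotopic_paths_sym pathstart_join)
  moreover 
  have "homotopic_paths S (cp (pathstart p) +++ p +++ cp (pathfinish p))
                                   ((\<lambda>u. h (u, 0)) +++ cp a +++ reversepath (\<lambda>u. h (u, 0)))"
    unfolding homotopic_paths_def homotopic_with_def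
  proof (intro exI strip conjI)
    let ?h = "\<lambda>y. (sp 0 (fst y) (\<lambda>u. h (u, 0)) +++ (\<lambda>u. h (Pair (fst y) u)) 
               +++ sp (fst y) 0 (\<lambda>u. h (u, 0))) (snd y)" 
    have "continuous_on ?A ?h"
      by (intro continuous_on_homotopic_join_lemma; simp add: path_defs joinpaths_def sp_def conth c1 c2)
    moreover have "?h \<in> ?A \<rightarrow> S"
      using hs
      unfolding joinpaths_def sp_def
      by (force simp: algebra_simps mult_le_one mult_left_le  intro: adhoc_le)
  ultimately show "continuous_map (prod_topology (top_of_set {0..1}) (top_of_set {0..1}))
                         (top_of_set S) ?h"
    by (simp add: image_subset_iff_funcset)
  qed (use ploop in \<open>simp_all add: reversepath_def path_defs joinpaths_def o_def sp_def conth c1 c2 cp_def\<close>)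
  moreover have "homotopic_paths S ((\<lambda>u. h (u, 0)) +++ cp a +++ reversepath (\<lambda>u. h (u, 0)))
                                   (cp (pathstart p))"
    by (rule *; simp add: pih0 pathstart_def pathfinish_def conth0; simp add: reversepath_def joinpaths_def cp_def)
  ultimately show ?thesis
    by (blast intro: homotopic_paths_trans)
qed

lemma hp_loop_parts:
  assumes loops: "homotopic_loops S (p +++ reversepath q) (cp a)"
    and pq: "path p" "path q" "path_image p \<subseteq> S" "path_image q \<subseteq> S"
    "pathstart p = pathstart q" "pathfinish p = pathfinish q"
  shows "homotopic_paths S p q"
proof -
  have paths: "homotopic_paths S (p +++ reversepath q) (cp (pathstart p))"
    using hl_imp_hp_null [OF loops] by simp
  have 1: "homotopic_paths S p (p +++ (cp (pathfinish p)))"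
    using pq hp_rid homotopic_paths_sym by blast
  have 2: "homotopic_paths S (p +++ (cp (pathfinish p))) (p +++ (reversepath q +++ q))"
    apply (rule homotopic_paths_join)
    using pq hp_linv[of q S] homotopic_paths_sym by auto
  have 3: "homotopic_paths S (p +++ (reversepath q +++ q)) ((p +++ reversepath q) +++ q)"
    by (rule homotopic_paths_assoc) (use pq in auto)
  have 4: "homotopic_paths S ((p +++ reversepath q) +++ q) (cp (pathstart p) +++ q)"
    apply (rule homotopic_paths_join[OF paths])
    using pq by auto
  have 5: "homotopic_paths S (cp (pathstart p) +++ q) q"
    using hp_lid[OF pq(2) pq(4)] pq(5) by simp
  show ?thesis
    by (meson 1 2 3 4 5 homotopic_paths_trans)
qed

fun J :: "(real \<Rightarrow> 'a::topological_space) list \<Rightarrow> real \<Rightarrow> 'a" where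
  "J [] = cp undefined"
| "J [q] = q"
| "J (q # q' # qs) = q +++ J (q' # qs)"

definition cl :: "'a::topological_space set \<Rightarrow> (real \<Rightarrow> 'a) list \<Rightarrow> bool" where
  "cl S qs \<longleftrightarrow> qs \<noteq> [] \<and> (\<forall>q\<in>set qs. path q \<and> path_image q \<subseteq> S) \<and>
     (\<forall>i. Suc i < length qs \<longrightarrow> pathfinish (qs!i) = pathstart (qs!Suc i))"

lemma cl_Cons: "cl S (q # q' # qs) \<longleftrightarrow> path q \<and> path_image q \<subseteq> S \<and> pathfinish q = pathstart q' \<and> cl S (q' # qs)"
  unfolding cl_def
  by (auto simp: nth_Cons split: nat.splits)

lemma cl_single: "cl S [q] \<longleftrightarrow> path q \<and> path_image q \<subseteq> S"
  by (auto simp: cl_def)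

lemma J_props:
  "cl S qs \<Longrightarrow> path (J qs) \<and> path_image (J qs) \<subseteq> S \<and> pathstart (J qs) = pathstart (hd qs) \<and> pathfinish (J qs) = pathfinish (last qs)"
proof (induction qs rule: J.induct)
  case 1 then show ?case by (simp add: cl_def)
next
  case (2 q) then show ?case by (simp add: cl_single)
next
  case (3 q q' qs)
  then have h: "path q" "path_image q \<subseteq> S" "pathfinish q = pathstart q'" "cl S (q' # qs)"
    by (auto simp: cl_Cons)
  with 3 show ?case by (auto simp: path_image_join)
qed

lemma J_append:
  "cl S qs \<Longrightarrow> cl S qs' \<Longrightarrow> pathfinish (last qs) = pathstart (hd qs') \<Longrightarrow>
   homotopic_paths S (J (qs @ qs')) (J qs +++ J qs')"
proof (induction qs rule: J.induct)
  case 1 then show ?case by (simp add: cl_def)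
next
  case (2 q)
  then obtain x xs where xs: "qs' = x # xs" by (cases qs') (auto simp: cl_def)
  show ?case using 2 J_props[OF 2(2)] by (simp add: xs cl_single path_image_join)
next
  case (3 q q' qs)
  then have h: "path q" "path_image q \<subseteq> S" "pathfinish q = pathstart q'" "cl S (q' # qs)"
    by (auto simp: cl_Cons)
  have IH: "homotopic_paths S (J ((q' # qs) @ qs')) (J (q' # qs) +++ J qs')"
    using 3 h by auto
  obtain x xs where xs: "qs' = x # xs" using 3 by (cases qs') (auto simp: cl_def)
  have P1: "path (J (q'#qs))" "path_image (J (q'#qs)) \<subseteq> S" "pathstart (J (q'#qs)) = pathstart q'"
     "pathfinish (J (q'#qs)) = pathfinish (last (q'#qs))"
    using J_props[OF h(4)] by auto
  have P2: "path (J qs')" "path_image (J qs') \<subseteq> S" "pathstart (J qs') = pathstart (hd qs')"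
    using J_props[OF 3(3)] by auto
  have st: "pathstart (J ((q' # qs) @ qs')) = pathstart q'"
    using homotopic_paths_imp_pathstart[OF IH] P1 by simp
  have A: "homotopic_paths S (q +++ J ((q' # qs) @ qs')) (q +++ (J (q' # qs) +++ J qs'))"
    apply (rule homotopic_paths_join) using h IH st by auto
  have B: "homotopic_paths S (q +++ (J (q' # qs) +++ J qs')) ((q +++ J (q' # qs)) +++ J qs')"
    by (rule homotopic_paths_assoc) (use h P1 P2 3(4) in auto)
  show ?case using homotopic_paths_trans[OF A B] by simp
qed

definition Jf :: "nat \<Rightarrow> (nat \<Rightarrow> real \<Rightarrow> 'a::topological_space) \<Rightarrow> real \<Rightarrow> 'a" where
  "Jf n a = J (map a [0..<n])"

definition clf :: "'a::topological_space set \<Rightarrow> nat \<Rightarrow> (nat \<Rightarrow> real \<Rightarrow> 'a) \<Rightarrow> bool" where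
  "clf S n a \<longleftrightarrow> 0 < n \<and> (\<forall>i<n. path (a i) \<and> path_image (a i) \<subseteq> S) \<and>
     (\<forall>i. Suc i < n \<longrightarrow> pathfinish (a i) = pathstart (a (Suc i)))"

lemma clf_cl: "clf S n a \<Longrightarrow> cl S (map a [0..<n])"
  by (auto simp: clf_def cl_def)

lemma Jf_props:
  assumes "clf S n a"
  shows "path (Jf n a)" "path_image (Jf n a) \<subseteq> S" "pathstart (Jf n a) = pathstart (a 0)"
    "pathfinish (Jf n a) = pathfinish (a (n - 1))"
proof -
  have n: "0 < n" using assms by (simp add: clf_def)
  have "hd (map a [0..<n]) = a 0" using n by (simp add: hd_map hd_upt)
  moreover have "last (map a [0..<n]) = a (n - 1)" using n by (simp add: last_map)
  ultimately show "path (Jf n a)" "path_image (Jf n a) \<subseteq> S" "pathstart (Jf n a) = pathstart (a 0)"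
    "pathfinish (Jf n a) = pathfinish (a (n - 1))"
    using J_props[OF clf_cl[OF assms]] by (auto simp: Jf_def)
qed

lemma Jf_1[simp]: "Jf 1 a = a 0" "Jf (Suc 0) a = a 0" by (simp_all add: Jf_def)

lemma Jf_add:
  assumes "clf S (n + m) a" "0 < n" "0 < m"
  shows "homotopic_paths S (Jf (n + m) a) (Jf n a +++ Jf m (\<lambda>i. a (n + i)))"
proof -
  have e: "map a [0..<n + m] = map a [0..<n] @ map (\<lambda>i. a (n + i)) [0..<m]"
  proof -
    have 1: "[n..<n+m] = map (\<lambda>i. n + i) [0..<m]" by (induct m) auto
    have 2: "[0..<n+m] = [0..<n] @ [n..<n+m]" using upt_add_eq_append[of 0 n m] by simp
    show ?thesis unfolding 2 1 by simp
  qed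
  have c1: "clf S n a" using assms by (auto simp: clf_def)
  have c2: "clf S m (\<lambda>i. a (n + i))" using assms by (auto simp: clf_def)
  have "pathfinish (last (map a [0..<n])) = pathstart (hd (map (\<lambda>i. a (n + i)) [0..<m]))"
    using assms by (auto simp: last_map hd_map clf_def hd_upt)
  then show ?thesis
    unfolding Jf_def e using J_append[OF clf_cl[OF c1] clf_cl[OF c2]] by simp
qed

lemma Jf_blocks:
  assumes "clf S (n * m) a" "0 < n" "0 < m"
  shows "homotopic_paths S (Jf (n * m) a) (Jf n (\<lambda>i. Jf m (\<lambda>j. a (i * m + j))))"
  using assms
proof (induction n)
  case 0 then show ?case by simp
next
  case (Suc n)
  show ?case
  proof (cases "n = 0")
    case True
    then show ?thesis using Jf_props[OF Suc.prems(1)] Suc.prems by simp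
  next
    case False
    then have "0 < n" by simp
    note nh = this
  have cA: "clf S (n * m) a" using Suc.prems nh by (auto simp: clf_def)
  have IH: "homotopic_paths S (Jf (n * m) a) (Jf n (\<lambda>i. Jf m (\<lambda>j. a (i * m + j))))"
    using Suc.IH cA nh Suc.prems by auto
  have cB: "clf S m (\<lambda>j. a (n * m + j))" using Suc.prems by (auto simp: clf_def)
  have blk: "clf S (Suc n) (\<lambda>i. Jf m (\<lambda>j. a (i * m + j)))"
  proof -
    have cm: "clf S m (\<lambda>j. a (i * m + j))" if "i < Suc n" for i
    proof -
      have "i * m + j < Suc n * m" if "j < m" for j
      proof -
        have "i * m + j < Suc i * m" using that by simp
        also have "Suc i * m \<le> Suc n * m" using \<open>i < Suc n\<close> by (intro mult_le_mono1) simp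
        finally show ?thesis .
      qed
      note b = this
      have "\<forall>k<Suc n * m. path (a k) \<and> path_image (a k) \<subseteq> S"
           "\<forall>k. Suc k < Suc n * m \<longrightarrow> pathfinish (a k) = pathstart (a (Suc k))"
        using Suc.prems(1) unfolding clf_def by blast+
      note cc = this
      show ?thesis unfolding clf_def
      proof (intro conjI allI impI)
        show "0 < m" by fact
      next
        fix j assume "j < m"
        then show "path (a (i * m + j))" "path_image (a (i * m + j)) \<subseteq> S" using cc(1) b by auto
      next
        fix j assume "Suc j < m"
        then have "Suc (i * m + j) < Suc n * m" using b[of "Suc j"] by simp
        then have "pathfinish (a (i * m + j)) = pathstart (a (Suc (i * m + j)))" using cc(2) by blast
        then show "pathfinish (a (i * m + j)) = pathstart (a (i * m + Suc j))" by simp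
      qed
    qed
    moreover have "pathfinish (Jf m (\<lambda>j. a (i * m + j))) = pathstart (Jf m (\<lambda>j. a (Suc i * m + j)))"
      if "Suc i < Suc n" for i
    proof -
      have e1: "Suc (i * m + (m - 1)) = Suc i * m" using \<open>0 < m\<close> by simp
      have "Suc i * m < Suc n * m" using that \<open>0 < m\<close> by simp
      then have "Suc (i * m + (m - 1)) < Suc n * m" by (simp only: e1)
      then have "pathfinish (a (i * m + (m - 1))) = pathstart (a (Suc (i * m + (m - 1))))"
        using Suc.prems(1) unfolding clf_def by blast
      then have "pathfinish (a (i * m + (m - 1))) = pathstart (a (Suc i * m + 0))"
        by (simp only: e1 add_0_right)
      moreover have "pathfinish (Jf m (\<lambda>j. a (i * m + j))) = pathfinish (a (i * m + (m - 1)))"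
        using Jf_props(4)[OF cm[of i]] that by simp
      moreover have "pathstart (Jf m (\<lambda>j. a (Suc i * m + j))) = pathstart (a (Suc i * m + 0))"
        using Jf_props(3)[OF cm[of "Suc i"]] that by (simp only: add_0_right)
      ultimately show ?thesis by simp
    qed
    moreover note Jf_props(1,2)[OF cm]
    ultimately show ?thesis unfolding clf_def by blast
  qed
  have "homotopic_paths S (Jf (Suc n * m) a) (Jf (n * m) a +++ Jf m (\<lambda>j. a (n * m + j)))"
    using Jf_add[of S "n * m" m a] Suc.prems nh by (simp add: add.commute)
  also have "homotopic_paths S \<dots> (Jf n (\<lambda>i. Jf m (\<lambda>j. a (i * m + j))) +++ Jf m (\<lambda>j. a (n * m + j)))"
  proof (rule homotopic_paths_join[OF IH])
    show "homotopic_paths S (Jf m (\<lambda>j. a (n * m + j))) (Jf m (\<lambda>j. a (n * m + j)))"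
      using Jf_props[OF cB] by simp
    have nm: "Suc (n * m - 1) = n * m" using nh \<open>0 < m\<close> by simp
    have "n * m < Suc n * m" using \<open>0 < m\<close> by simp
    then have "Suc (n * m - 1) < Suc n * m" by (simp only: nm)
    then have "pathfinish (a (n * m - 1)) = pathstart (a (Suc (n * m - 1)))"
      using Suc.prems(1) unfolding clf_def by blast
    then show "pathfinish (Jf (n * m) a) = pathstart (Jf m (\<lambda>j. a (n * m + j)))"
      using Jf_props(4)[OF cA] Jf_props(3)[OF cB] by (simp only: nm add_0_right)
  qed
  also have "homotopic_paths S \<dots> (Jf (Suc n) (\<lambda>i. Jf m (\<lambda>j. a (i * m + j))))"
    using Jf_add[OF _ nh, of S 1 "(\<lambda>i. Jf m (\<lambda>j. a (i * m + j)))"] blk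
    by (simp add: homotopic_paths_sym)
  finally show ?thesis .
  qed
qed

lemma Jf_snoc:
  assumes "clf S (Suc n) a" "0 < n"
  shows "homotopic_paths S (Jf (Suc n) a) (Jf n a +++ a n)"
  using Jf_add[of S n 1 a] assms by simp

lemma clf_less: "clf S n a \<Longrightarrow> 0 < m \<Longrightarrow> m \<le> n \<Longrightarrow> clf S m a"
  by (auto simp: clf_def)

lemma ladder:
  assumes "clf S n a" "clf S n b"
    and r: "\<And>i. i \<le> n \<Longrightarrow> path (r i) \<and> path_image (r i) \<subseteq> S"
    and e: "\<And>i. i < n \<Longrightarrow> pathstart (r i) = pathstart (a i) \<and> pathfinish (r i) = pathstart (b i) \<and>
               pathstart (r (Suc i)) = pathfinish (a i) \<and> pathfinish (r (Suc i)) = pathfinish (b i)"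
    and sq: "\<And>i. i < n \<Longrightarrow> homotopic_paths S (a i +++ r (Suc i)) (r i +++ b i)"
  shows "homotopic_paths S (Jf n a +++ r n) (r 0 +++ Jf n b)"
  using assms
proof (induction n)
  case 0 then show ?case by (simp add: clf_def)
next
  case (Suc n)
  show ?case
  proof (cases "n = 0")
    case True
    then show ?thesis using Suc.prems(5)[of 0] by simp
  next
    case False
    then have n: "0 < n" by simp
    have ca: "clf S n a" and cb: "clf S n b" using clf_less[OF Suc.prems(1) n] clf_less[OF Suc.prems(2) n] by auto
    have IH: "homotopic_paths S (Jf n a +++ r n) (r 0 +++ Jf n b)"
    proof (rule Suc.IH[OF ca cb])
      fix i assume "i \<le> n" then show "path (r i) \<and> path_image (r i) \<subseteq> S" using Suc.prems(3)[of i] by simp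
    next
      fix i assume "i < n" then show "pathstart (r i) = pathstart (a i) \<and> pathfinish (r i) = pathstart (b i) \<and>
               pathstart (r (Suc i)) = pathfinish (a i) \<and> pathfinish (r (Suc i)) = pathfinish (b i)"
        using Suc.prems(4)[of i] by simp
    next
      fix i assume "i < n" then show "homotopic_paths S (a i +++ r (Suc i)) (r i +++ b i)"
        using Suc.prems(5)[of i] by simp
    qed
    have pa: "path (a n)" "path_image (a n) \<subseteq> S" "path (b n)" "path_image (b n) \<subseteq> S"
      using Suc.prems(1,2) by (auto simp: clf_def)
    have pr: "path (r n)" "path_image (r n) \<subseteq> S" "path (r (Suc n))" "path_image (r (Suc n)) \<subseteq> S"
       "path (r 0)" "path_image (r 0) \<subseteq> S"
      using Suc.prems(3)[of n] Suc.prems(3)[of "Suc n"] Suc.prems(3)[of 0] by auto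
    have en: "pathstart (r n) = pathstart (a n)" "pathfinish (r n) = pathstart (b n)"
       "pathstart (r (Suc n)) = pathfinish (a n)" "pathfinish (r (Suc n)) = pathfinish (b n)"
      using Suc.prems(4)[of n] by auto
    have e0: "pathstart (r 0) = pathstart (a 0)" "pathfinish (r 0) = pathstart (b 0)"
      using Suc.prems(4)[of 0] by auto
    have ja: "path (Jf n a)" "path_image (Jf n a) \<subseteq> S" "pathstart (Jf n a) = pathstart (a 0)"
      "pathfinish (Jf n a) = pathfinish (a (n - 1))"
      using Jf_props[OF ca] by auto
    have jb: "path (Jf n b)" "path_image (Jf n b) \<subseteq> S" "pathstart (Jf n b) = pathstart (b 0)"
      "pathfinish (Jf n b) = pathfinish (b (n - 1))"
      using Jf_props[OF cb] by auto
    have fa: "pathfinish (a (n - 1)) = pathstart (a n)" "pathfinish (b (n - 1)) = pathstart (b n)"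
    proof -
      have sn: "Suc (n - 1) = n" using n by simp
      have "\<forall>i. Suc i < Suc n \<longrightarrow> pathfinish (a i) = pathstart (a (Suc i))"
           "\<forall>i. Suc i < Suc n \<longrightarrow> pathfinish (b i) = pathstart (b (Suc i))"
        using Suc.prems(1,2) by (simp_all add: clf_def)
      note qq = this
      show "pathfinish (a (n - 1)) = pathstart (a n)" "pathfinish (b (n - 1)) = pathstart (b n)"
        using spec[OF qq(1), of "n - 1"] spec[OF qq(2), of "n - 1"] sn by simp_all
    qed
    have s1: "homotopic_paths S (Jf (Suc n) a +++ r (Suc n)) ((Jf n a +++ a n) +++ r (Suc n))"
      by (rule homotopic_paths_join) (use Jf_snoc[OF Suc.prems(1) n] Jf_props(4)[OF Suc.prems(1)] pr en in auto)
    have s2: "homotopic_paths S ((Jf n a +++ a n) +++ r (Suc n)) (Jf n a +++ (a n +++ r (Suc n)))"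
      by (rule homotopic_paths_sym, rule homotopic_paths_assoc) (use ja pa pr en fa in auto)
    have s3: "homotopic_paths S (Jf n a +++ (a n +++ r (Suc n))) (Jf n a +++ (r n +++ b n))"
      by (rule homotopic_paths_join) (use ja Suc.prems(5)[of n] fa in auto)
    have s4: "homotopic_paths S (Jf n a +++ (r n +++ b n)) ((Jf n a +++ r n) +++ b n)"
      by (rule homotopic_paths_assoc) (use ja pa pr en fa in auto)
    have s5: "homotopic_paths S ((Jf n a +++ r n) +++ b n) ((r 0 +++ Jf n b) +++ b n)"
      by (rule homotopic_paths_join) (use IH pa en in auto)
    have s6: "homotopic_paths S ((r 0 +++ Jf n b) +++ b n) (r 0 +++ (Jf n b +++ b n))"
      by (rule homotopic_paths_sym, rule homotopic_paths_assoc) (use jb pa pr e0 fa in auto)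
    have s7: "homotopic_paths S (r 0 +++ (Jf n b +++ b n)) (r 0 +++ Jf (Suc n) b)"
      by (rule homotopic_paths_join) (use Jf_snoc[OF Suc.prems(2) n] pr e0 jb homotopic_paths_sym in auto)
    show ?thesis
      by (rule homotopic_paths_trans[OF s1 homotopic_paths_trans[OF s2 homotopic_paths_trans[OF s3
            homotopic_paths_trans[OF s4 homotopic_paths_trans[OF s5 homotopic_paths_trans[OF s6 s7]]]]]])
  qed
qed

lemma ladder0:
  assumes "clf S n a" "clf S n b"
    and r: "\<And>i. i \<le> n \<Longrightarrow> path (r i) \<and> path_image (r i) \<subseteq> S"
    and e: "\<And>i. i < n \<Longrightarrow> pathstart (r i) = pathstart (a i) \<and> pathfinish (r i) = pathstart (b i) \<and>
               pathstart (r (Suc i)) = pathfinish (a i) \<and> pathfinish (r (Suc i)) = pathfinish (b i)"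
    and sq: "\<And>i. i < n \<Longrightarrow> homotopic_paths S (a i +++ r (Suc i)) (r i +++ b i)"
    and r0: "homotopic_paths S (r 0) (cp (pathstart (r 0)))"
    and rn: "homotopic_paths S (r n) (cp (pathstart (r n)))"
  shows "homotopic_paths S (Jf n a) (Jf n b)"
proof -
  have n: "0 < n" using assms(1) by (simp add: clf_def)
  have L: "homotopic_paths S (Jf n a +++ r n) (r 0 +++ Jf n b)" by (rule ladder[OF assms(1-5)])
  have ja: "path (Jf n a)" "path_image (Jf n a) \<subseteq> S" "pathstart (Jf n a) = pathstart (a 0)"
      "pathfinish (Jf n a) = pathfinish (a (n - 1))"
      using Jf_props[OF assms(1)] by auto
  have jb: "path (Jf n b)" "path_image (Jf n b) \<subseteq> S" "pathstart (Jf n b) = pathstart (b 0)"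
      "pathfinish (Jf n b) = pathfinish (b (n - 1))"
      using Jf_props[OF assms(2)] by auto
  have rnn: "pathstart (r n) = pathfinish (a (n - 1))" using e[of "n - 1"] n by simp
  have r00: "pathfinish (r 0) = pathstart (b 0)" "pathstart (r 0) = pathstart (a 0)" using e[of 0] n by auto
  have rn_e: "pathfinish (r n) = pathstart (r n)" using homotopic_paths_imp_pathfinish[OF rn] by simp
  have r0_e: "pathfinish (r 0) = pathstart (r 0)" using homotopic_paths_imp_pathfinish[OF r0] by simp
  have 1: "homotopic_paths S (Jf n a) (Jf n a +++ cp (pathfinish (Jf n a)))"
    using hp_rid[OF ja(1,2)] homotopic_paths_sym by blast
  have 2: "homotopic_paths S (Jf n a +++ cp (pathfinish (Jf n a))) (Jf n a +++ r n)"
    by (rule homotopic_paths_join) (use ja rnn rn homotopic_paths_sym in auto)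
  have 3: "homotopic_paths S (r 0 +++ Jf n b) (cp (pathstart (Jf n b)) +++ Jf n b)"
    by (rule homotopic_paths_join) (use jb r00 r0 r0_e in auto)
  have 4: "homotopic_paths S (cp (pathstart (Jf n b)) +++ Jf n b) (Jf n b)"
    using hp_lid[OF jb(1,2)] by blast
  show ?thesis
    by (rule homotopic_paths_trans[OF 1 homotopic_paths_trans[OF 2 homotopic_paths_trans[OF L homotopic_paths_trans[OF 3 4]]]])
qed

definition good :: "'b::metric_space set \<Rightarrow> real \<Rightarrow> bool" where
  "good Y \<rho> \<longleftrightarrow> (\<forall>c\<in>Y. \<forall>g. path g \<and> pathfinish g = pathstart g \<and> path_image g \<subseteq> Y \<inter> ball c \<rho>
       \<longrightarrow> homotopic_loops Y g (cp (pathstart g)))"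

lemma img_sub: "path_image p \<subseteq> S \<Longrightarrow> T \<subseteq> {0..1} \<Longrightarrow> p ` T \<subseteq> S"
  unfolding path_image_def by blast

lemma good_mono: assumes "good Y \<rho>" "\<rho>' \<le> \<rho>" shows "good Y \<rho>'"
proof (unfold good_def, intro ballI allI impI)
  fix c g assume c: "c \<in> Y" and H: "path g \<and> pathfinish g = pathstart g \<and> path_image g \<subseteq> Y \<inter> ball c \<rho>'"
  have "ball c \<rho>' \<subseteq> ball c \<rho>" using \<open>\<rho>' \<le> \<rho>\<close> by (rule subset_ball)
  then have "path g \<and> pathfinish g = pathstart g \<and> path_image g \<subseteq> Y \<inter> ball c \<rho>" using H by blast
  then show "homotopic_loops Y g (cp (pathstart g))" using \<open>good Y \<rho>\<close> c unfolding good_def by blast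
qed

lemma SQ:
  assumes "good Y \<rho>" "c \<in> Y" "path p1" "path p2" "path_image p1 \<subseteq> Y \<inter> ball c \<rho>"
    "path_image p2 \<subseteq> Y \<inter> ball c \<rho>" "pathstart p1 = pathstart p2" "pathfinish p1 = pathfinish p2"
  shows "homotopic_paths Y p1 p2"
proof -
  let ?g = "p1 +++ reversepath p2"
  have g: "path ?g" "pathfinish ?g = pathstart ?g" "path_image ?g \<subseteq> Y \<inter> ball c \<rho>"
    using assms by (auto simp: path_image_join)
  then have "homotopic_loops Y ?g (cp (pathstart ?g))"
    using assms(1,2) unfolding good_def by blast
  then show ?thesis
    by (rule hp_loop_parts) (use assms in auto)
qed

lemma SQ':
  assumes "good Y \<rho>" "c \<in> Y" "path p1" "path p2" "path_image p1 \<subseteq> Y" "path_image p1 \<subseteq> ball c \<rho>"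
    "path_image p2 \<subseteq> Y" "path_image p2 \<subseteq> ball c \<rho>" "pathstart p1 = pathstart p2" "pathfinish p1 = pathfinish p2"
  shows "homotopic_paths Y p1 p2"
  using SQ[of Y \<rho> c p1 p2] assms by auto

lemma null_small:
  assumes "good Y \<rho>" "c \<in> Y" "path g" "path_image g \<subseteq> Y" "path_image g \<subseteq> ball c \<rho>" "pathfinish g = pathstart g"
  shows "homotopic_paths Y g (cp (pathstart g))"
proof (rule SQ'[OF assms(1,2,3)])
  have "pathstart g \<in> path_image g" by (rule pathstart_in_path_image)
  then show "path_image (cp (pathstart g)) \<subseteq> Y" "path_image (cp (pathstart g)) \<subseteq> ball c \<rho>"
    using assms by auto
qed (use assms in auto)

lemma path_sp:
  assumes "path g" "u \<in> {0..1}" "v \<in> {0..1}"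
  shows "path (sp u v g)"
proof -
  have "continuous_on {0..1} (\<lambda>x. (v - u) * x + u)" by (intro continuous_intros)
  moreover have "(\<lambda>x. (v - u) * x + u) ` {0..1} \<subseteq> {0..1}"
  proof
    fix y assume "y \<in> (\<lambda>x. (v - u) * x + u) ` {0..1}"
    then obtain x where x: "x \<in> {0..1}" "y = (v - u) * x + u" by auto
    have "y = (1 - x) * u + x * v" using x by (simp add: algebra_simps)
    moreover have "0 \<le> (1 - x) * u + x * v" using x assms by auto
    moreover have "(1 - x) * u + x * v \<le> (1 - x) * 1 + x * 1"
      using x assms by (intro add_mono mult_left_mono) auto
    ultimately show "y \<in> {0..1}" by simp
  qed
  ultimately have "continuous_on {0..1} (g \<circ> (\<lambda>x. (v - u) * x + u))"
    using assms(1) unfolding path_def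
    by (metis continuous_on_compose continuous_on_subset)
  then show ?thesis unfolding path_def sp_def o_def .
qed

lemma sp_ends[simp]: "pathstart (sp u v g) = g u" "pathfinish (sp u v g) = g v"
  by (auto simp: sp_def pathstart_def pathfinish_def)

lemma path_image_sp:
  assumes "u \<le> v"
  shows "path_image (sp u v g) = g ` {u..v}"
proof
  show "path_image (sp u v g) \<subseteq> g ` {u..v}"
  proof
    fix y assume "y \<in> path_image (sp u v g)"
    then obtain x where x: "x \<in> {0..1}" "y = g ((v - u) * x + u)" by (auto simp: path_image_def sp_def)
    have "(v - u) * x \<le> v - u" using x assms by (intro mult_left_le) auto
    moreover have "0 \<le> (v - u) * x" using x assms by simp
    ultimately have "(v - u) * x + u \<in> {u..v}" by simp
    then show "y \<in> g ` {u..v}" using x by auto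
  qed
next
  show "g ` {u..v} \<subseteq> path_image (sp u v g)"
  proof
    fix y assume "y \<in> g ` {u..v}"
    then obtain t where t: "t \<in> {u..v}" "y = g t" by auto
    show "y \<in> path_image (sp u v g)"
    proof (cases "u = v")
      case True
      then show ?thesis using t by (auto simp: path_image_def sp_def)
    next
      case False
      then have uv: "u < v" using assms by simp
      let ?x = "(t - u) / (v - u)"
      have "?x \<in> {0..1}" using t uv by (auto simp: divide_simps)
      moreover have "(v - u) * ?x + u = t" using uv by (simp add: field_simps)
      ultimately have "sp u v g ?x = y" using t unfolding sp_def by simp
      then show ?thesis using \<open>?x \<in> {0..1}\<close> unfolding path_image_def by blast
    qed
  qed
qed

lemma join_sp:
  assumes "path g" "path_image g \<subseteq> S"
      and u: "0 \<le> u" and uv: "u < v" and vw: "v < w" and w: "w \<le> 1"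
    shows "homotopic_paths S (sp u v g +++ sp v w g) (sp u w g)"
proof -
  have wu: "0 < w - u" using uv vw by simp
  have ps: "path (sp u w g)" using path_sp[OF assms(1)] u uv vw w by auto
  have "{u..w} \<subseteq> {0..1}" using u w by auto
  then have pis: "path_image (sp u w g) \<subseteq> S" using path_image_sp[of u w g] img_sub[OF assms(2)] uv vw by auto
  let ?f = "\<lambda>t. if t \<le> 1/2 then (2 * (v - u) * t) / (w - u) else ((v - u) + (w - v) * (2 * t - 1)) / (w - u)"
  show ?thesis
  proof (rule homotopic_paths_sym [OF homotopic_paths_reparametrize [where f = ?f]])
    show "path (sp u w g)" by (rule ps)
    show "path_image (sp u w g) \<subseteq> S" by (rule pis)
    have t2: "\<And>t::real. t*2 = 1 \<Longrightarrow> t = 1/2" by auto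
    show "continuous_on {0..1} ?f"
    proof -
      have c1: "continuous_on {0..1/2} (\<lambda>t::real. 2 * (v - u) * t / (w - u))"
        by (intro continuous_intros) (use wu in auto)
      have c2: "continuous_on {1/2..1} (\<lambda>t::real. ((v - u) + (w - v) * (2 * t - 1)) / (w - u))"
        by (intro continuous_intros) (use wu in auto)
      have b: "\<forall>t. (t \<in> {0..1/2} \<and> \<not> t \<le> 1/2) \<or> (t \<in> {1/2..1} \<and> t \<le> 1/2) \<longrightarrow>
          2 * (v - u) * t / (w - u) = ((v - u) + (w - v) * (2 * t - 1)) / (w - u)"
      proof (intro allI impI)
        fix t :: real assume "(t \<in> {0..1/2} \<and> \<not> t \<le> 1/2) \<or> (t \<in> {1/2..1} \<and> t \<le> 1/2)"
        then have "t = 1/2" by auto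
        then have "2 * t - 1 = 0" "2 * (v - u) * t = v - u" by (simp_all only: \<open>t = 1/2\<close>) simp_all
        then show "2 * (v - u) * t / (w - u) = ((v - u) + (w - v) * (2 * t - 1)) / (w - u)" by simp
      qed
      show ?thesis
        unfolding split_01 by (rule continuous_on_cases[OF closed_atLeastAtMost closed_atLeastAtMost c1 c2 b])
    qed
    show "?f \<in> {0..1} \<rightarrow> {0..1}"
    proof
      fix t :: real assume t: "t \<in> {0..1}"
      show "?f t \<in> {0..1}"
      proof (cases "t \<le> 1/2")
        case True
        have "(v - u) * (2 * t) \<le> (v - u) * 1" using True uv by (intro mult_left_mono) auto
        then have "2 * (v - u) * t \<le> w - u" using vw by (simp add: algebra_simps)
        moreover have "0 \<le> 2 * (v - u) * t" using t uv by simp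
        ultimately show ?thesis using True wu by (simp add: divide_simps)
      next
        case False
        have "(w - v) * (2 * t - 1) \<le> (w - v) * 1" using t vw by (intro mult_left_mono) auto
        then have "(v - u) + (w - v) * (2 * t - 1) \<le> w - u" by simp
        moreover have "0 \<le> (v - u) + (w - v) * (2 * t - 1)" using False uv vw by simp
        ultimately show ?thesis using False wu by (simp add: divide_simps)
      qed
    qed
    show "(sp u v g +++ sp v w g) t = sp u w g (?f t)" if "t \<in> {0..1}" for t
    proof (cases "t \<le> 1/2")
      case True
      have L: "(sp u v g +++ sp v w g) t = g ((v - u) * (2 * t) + u)" using True by (simp add: joinpaths_def sp_def)
      have R: "sp u w g (?f t) = g ((w - u) * (2 * (v - u) * t / (w - u)) + u)" using True by (simp add: sp_def)
      have A: "(w - u) * (2 * (v - u) * t / (w - u)) + u = (v - u) * (2 * t) + u" using wu by simp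
      show ?thesis using L R A by metis
    next
      case False
      have L: "(sp u v g +++ sp v w g) t = g ((w - v) * (2 * t - 1) + v)" using False by (simp add: joinpaths_def sp_def)
      have R: "sp u w g (?f t) = g ((w - u) * (((v - u) + (w - v) * (2 * t - 1)) / (w - u)) + u)" using False by (simp add: sp_def)
      have A: "(w - u) * (((v - u) + (w - v) * (2 * t - 1)) / (w - u)) + u = (w - v) * (2 * t - 1) + v" using wu by simp
      show ?thesis using L R A by metis
    qed
  qed (use wu in auto)
qed

definition pieces :: "nat \<Rightarrow> (real \<Rightarrow> 'a) \<Rightarrow> nat \<Rightarrow> real \<Rightarrow> 'a" where
  "pieces n p = (\<lambda>i. sp (real i / real n) (real (Suc i) / real n) p)"

lemma clf_pieces:
  assumes "path p" "path_image p \<subseteq> S" "0 < n"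
  shows "clf S n (pieces n p)"
proof -
  have "path (pieces n p i) \<and> path_image (pieces n p i) \<subseteq> S" if "i < n" for i
  proof -
    have a: "real i / real n \<in> {0..1}" "real (Suc i) / real n \<in> {0..1}" "real i / real n \<le> real (Suc i) / real n"
      using that assms by (auto simp: divide_simps)
    have "{real i / real n..real (Suc i) / real n} \<subseteq> {0..1}" using a by auto
    then have "p ` {real i / real n..real (Suc i) / real n} \<subseteq> S"
      using img_sub[OF assms(2)] by blast
    then show ?thesis using path_sp[OF assms(1) a(1,2)] path_image_sp[OF a(3), of p]
      unfolding pieces_def by simp
  qed
  then show ?thesis using assms by (auto simp: clf_def pieces_def)
qed

lemma Jf_pieces:
  assumes "path p" "path_image p \<subseteq> S" "0 < n"
  shows "homotopic_paths S p (Jf n (pieces n p))"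
proof -
  have "homotopic_paths S (Jf k (pieces n p)) (sp 0 (real k / real n) p)" if "0 < k" "k \<le> n" for k
    using that
  proof (induction k)
    case 0 then show ?case by simp
  next
    case (Suc k)
    show ?case
    proof (cases "k = 0")
      case True
      have "path (sp 0 (1 / real n) p)" using path_sp[OF assms(1)] assms by auto
      moreover have "path_image (sp 0 (1 / real n) p) \<subseteq> S"
      proof -
        have "{0..1 / real n} \<subseteq> {0..1}" using assms by (auto simp: divide_simps)
        then show ?thesis using path_image_sp[of 0 "1 / real n" p] img_sub[OF assms(2)] by auto
      qed
      ultimately show ?thesis using True by (simp add: pieces_def)
    next
      case False
      then have k: "0 < k" by simp
      have cl: "clf S (Suc k) (pieces n p)" using clf_pieces[OF assms] Suc.prems clf_less by blast
      have IH: "homotopic_paths S (Jf k (pieces n p)) (sp 0 (real k / real n) p)"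
        using Suc.IH k Suc.prems by simp
      have "homotopic_paths S (Jf (Suc k) (pieces n p)) (Jf k (pieces n p) +++ pieces n p k)"
        by (rule Jf_snoc[OF cl k])
      also have "homotopic_paths S \<dots> (sp 0 (real k / real n) p +++ pieces n p k)"
      proof (rule homotopic_paths_join[OF IH])
        have "Suc k \<le> n" by (rule Suc.prems(2))
        then show "homotopic_paths S (pieces n p k) (pieces n p k)"
          using clf_pieces[OF assms] by (simp add: clf_def)
        have "pathfinish (Jf k (pieces n p)) = pathfinish (pieces n p (k - 1))"
          using Jf_props(4)[OF clf_less[OF cl k]] by simp
        also have "\<dots> = p (real k / real n)" using k by (simp add: pieces_def)
        finally show "pathfinish (Jf k (pieces n p)) = pathstart (pieces n p k)" by (simp add: pieces_def)
      qed
      also have "homotopic_paths S \<dots> (sp 0 (real (Suc k) / real n) p)"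
        unfolding pieces_def
        by (rule join_sp[OF assms(1,2)]) (use k Suc.prems in \<open>auto simp: divide_simps\<close>)
      finally show ?thesis .
    qed
  qed
  from this[of n] have "homotopic_paths S (Jf n (pieces n p)) (sp 0 1 p)" using assms by simp
  moreover have "homotopic_paths S p (sp 0 1 p)"
    by (rule homotopic_paths_eq) (use assms in \<open>auto simp: sp_def\<close>)
  ultimately show ?thesis by (meson homotopic_paths_sym homotopic_paths_trans)
qed

lemma clf_block:
  assumes "clf S (n * m) a" "i < n"
  shows "clf S m (\<lambda>j. a (i * m + j))"
proof -
  have m: "0 < m" using assms by (auto simp: clf_def)
  have b: "i * m + j < n * m" if "j < m" for j
  proof -
    have "i * m + j < Suc i * m" using that by simp
    also have "Suc i * m \<le> n * m" using \<open>i < n\<close> by (intro mult_le_mono1) simp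
    finally show ?thesis .
  qed
  have cc: "\<forall>k<n * m. path (a k) \<and> path_image (a k) \<subseteq> S"
       "\<forall>k. Suc k < n * m \<longrightarrow> pathfinish (a k) = pathstart (a (Suc k))"
    using assms(1) unfolding clf_def by blast+
  show ?thesis unfolding clf_def
  proof (intro conjI allI impI)
    show "0 < m" by (rule m)
  next
    fix j assume "j < m"
    then show "path (a (i * m + j))" "path_image (a (i * m + j)) \<subseteq> S" using cc(1) b by auto
  next
    fix j assume "Suc j < m"
    then have "Suc (i * m + j) < n * m" using b[of "Suc j"] by simp
    then have "pathfinish (a (i * m + j)) = pathstart (a (Suc (i * m + j)))" using cc(2) by blast
    then show "pathfinish (a (i * m + j)) = pathstart (a (i * m + Suc j))" by simp
  qed
qed

lemma block_ends:
  assumes "clf S (n * m) a" "i < n"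
  shows "pathstart (Jf m (\<lambda>j. a (i * m + j))) = pathstart (a (i * m))"
    "pathfinish (Jf m (\<lambda>j. a (i * m + j))) = pathfinish (a (i * m + (m - 1)))"
  using Jf_props(3,4)[OF clf_block[OF assms]] by simp_all

lemma clf_blocks:
  assumes "clf S (n * m) a" "0 < n"
  shows "clf S n (\<lambda>i. Jf m (\<lambda>j. a (i * m + j)))"
proof -
  have m: "0 < m" using assms by (auto simp: clf_def)
  have "path (Jf m (\<lambda>j. a (i * m + j))) \<and> path_image (Jf m (\<lambda>j. a (i * m + j))) \<subseteq> S" if "i < n" for i
    using Jf_props(1,2)[OF clf_block[OF assms(1) that]] by simp
  moreover have "pathfinish (Jf m (\<lambda>j. a (i * m + j))) = pathstart (Jf m (\<lambda>j. a (Suc i * m + j)))"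
    if "Suc i < n" for i
  proof -
    have e1: "Suc (i * m + (m - 1)) = Suc i * m" using m by simp
    have "Suc i * m < n * m" by (rule mult_less_mono1[OF that m])
    then have "Suc (i * m + (m - 1)) < n * m" by (simp only: e1)
    then have "pathfinish (a (i * m + (m - 1))) = pathstart (a (Suc (i * m + (m - 1))))"
      using assms(1) unfolding clf_def by blast
    then show ?thesis
      using block_ends(2)[OF assms(1), of i] block_ends(1)[OF assms(1), of "Suc i"] that e1 by (simp add: add.commute)
  qed
  ultimately show ?thesis using assms by (auto simp: clf_def)
qed

lemma J_image: "qs \<noteq> [] \<Longrightarrow> path_image (J qs) \<subseteq> (\<Union>q\<in>set qs. path_image q)"
proof (induction qs rule: J.induct)
  case (3 q q' qs)
  then show ?case using path_image_join_subset[of q "J (q' # qs)"] by auto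
qed auto

lemma Jf_image: "0 < n \<Longrightarrow> path_image (Jf n a) \<subseteq> (\<Union>i<n. path_image (a i))"
  using J_image[of "map a [0..<n]"] unfolding Jf_def by (fastforce simp: lessThan_atLeast0)

lemma ball_trans: "dist c y < r1 \<Longrightarrow> ball y r2 \<subseteq> ball c (r1 + r2)"
  by (auto simp: ball_def) (metis add_strict_mono dist_triangle le_less_trans)

lemma ball_trans': "dist c y \<le> r1 \<Longrightarrow> ball y r2 \<subseteq> ball c (r1 + r2)"
  by (auto simp: ball_def) (metis add_le_less_mono dist_triangle le_less_trans)

lemma ball_mono': "r \<le> r' \<Longrightarrow> ball c r \<subseteq> ball c r'"
  by auto

lemma frac01: "i \<le> n \<Longrightarrow> 0 < n \<Longrightarrow> real i / real n \<in> {0..1}"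
  by (auto simp: divide_simps)

lemma int01:
  assumes "i < n" "t \<in> {real i / real n..real (Suc i) / real n}"
  shows "t \<in> {0..1}"
proof -
  have "0 \<le> real i / real n" by simp
  moreover have "real (Suc i) / real n \<le> 1" using assms(1) by (simp add: divide_simps)
  moreover have h: "real i / real n \<le> t" "t \<le> real (Suc i) / real n" using assms(2) by auto
  ultimately have "0 \<le> t" "t \<le> 1" by linarith+
  then show ?thesis by simp
qed

lemma frac_block:
  assumes "0 < n" "0 < m" "j \<le> m"
  shows "real i / real n \<le> real (i * m + j) / real (n * m)"
    "real (i * m + j) / real (n * m) \<le> real (Suc i) / real n"
proof -
  have e: "real (i * m + j) / real (n * m) = real i / real n + real j / (real n * real m)"
    using assms by (simp add: field_simps)
  have "0 \<le> real j / (real n * real m)" by simp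
  then show "real i / real n \<le> real (i * m + j) / real (n * m)" unfolding e by simp
  have "real j / (real n * real m) \<le> real m / (real n * real m)"
    using assms by (intro divide_right_mono) auto
  also have "\<dots> = 1 / real n" using assms by simp
  finally show "real (i * m + j) / real (n * m) \<le> real (Suc i) / real n"
    unfolding e by (simp add: add_divide_distrib)
qed

lemma frac_mult: "0 < m \<Longrightarrow> real (i * m) / real (n * m) = real i / real n"
  by simp

locale corr =
  fixes X :: "'a::metric_space set" and Y :: "'b::metric_space set" and C :: "'a \<Rightarrow> 'b \<Rightarrow> bool"
    and e :: real and \<eta> :: real and \<rho> :: real and a :: 'a and b :: 'b
  assumes CY: "\<And>x x' y y'. C x y \<Longrightarrow> C x' y' \<Longrightarrow> x \<in> X \<Longrightarrow> x' \<in> X \<Longrightarrow> y \<in> Y \<Longrightarrow> y' \<in> Y \<Longrightarrow>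
                  dist y y' \<le> dist x x' + e"
    and tot: "\<And>x. x \<in> X \<Longrightarrow> \<exists>y\<in>Y. C x y"
    and aX: "a \<in> X" and bY: "b \<in> Y" and Cab: "C a b"
    and shortY: "\<And>u v. u \<in> Y \<Longrightarrow> v \<in> Y \<Longrightarrow> \<exists>q. path q \<and> path_image q \<subseteq> Y \<and>
                   path_image q \<subseteq> ball u (dist u v + \<eta>) \<and> pathstart q = u \<and> pathfinish q = v"
    and goodY: "good Y \<rho>"
    and eta: "0 < \<eta>" and e0: "0 \<le> e" and rho: "3 * e + 4 * \<eta> < \<rho>"
begin

definition K :: real where "K = e + 2 * \<eta>"

definition sh :: "'b \<Rightarrow> 'b \<Rightarrow> real \<Rightarrow> 'b" where
  "sh u v = (SOME q. path q \<and> path_image q \<subseteq> Y \<and>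
                   path_image q \<subseteq> ball u (dist u v + \<eta>) \<and> pathstart q = u \<and> pathfinish q = v)"

lemma sh:
  assumes "u \<in> Y" "v \<in> Y"
  shows "path (sh u v)" "path_image (sh u v) \<subseteq> Y" "path_image (sh u v) \<subseteq> ball u (dist u v + \<eta>)"
    "pathstart (sh u v) = u" "pathfinish (sh u v) = v"
  using someI_ex[OF shortY[OF assms]] unfolding sh_def by blast+

lemma sh_null:
  assumes "u \<in> Y"
  shows "homotopic_paths Y (sh u u) (cp u)"
proof -
  have "good Y \<eta>" using goodY rho eta e0 by (intro good_mono[OF goodY]) auto
  then show ?thesis using null_small[of Y \<eta> u "sh u u"] sh[OF assms assms] assms by simp
qed

definition lpX :: "(real \<Rightarrow> 'a) \<Rightarrow> bool" where
  "lpX p \<longleftrightarrow> path p \<and> path_image p \<subseteq> X \<and> pathstart p = a \<and> pathfinish p = a"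

definition samp :: "real \<Rightarrow> real \<Rightarrow> (real \<Rightarrow> 'a) \<Rightarrow> nat \<Rightarrow> (nat \<Rightarrow> 'b) \<Rightarrow> (nat \<Rightarrow> real \<Rightarrow> 'b) \<Rightarrow> bool" where
  "samp \<sigma> \<kappa> p n ys qs \<longleftrightarrow> 0 < n \<and> (\<forall>i\<le>n. ys i \<in> Y \<and> C (p (real i / real n)) (ys i)) \<and> ys 0 = b \<and> ys n = b \<and>
     (\<forall>i<n. p ` {real i / real n..real (Suc i) / real n} \<subseteq> ball (p (real i / real n)) \<sigma>) \<and>
     (\<forall>i<n. path (qs i) \<and> path_image (qs i) \<subseteq> Y \<and> path_image (qs i) \<subseteq> ball (ys i) \<kappa> \<and>
            pathstart (qs i) = ys i \<and> pathfinish (qs i) = ys (Suc i))"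

definition adm :: "real \<Rightarrow> real \<Rightarrow> (real \<Rightarrow> 'a) \<Rightarrow> (real \<Rightarrow> 'b) \<Rightarrow> bool" where
  "adm \<sigma> \<kappa> p q \<longleftrightarrow> (\<exists>n ys qs. samp \<sigma> \<kappa> p n ys qs \<and> homotopic_paths Y q (Jf n qs))"

lemma lpX_in: "lpX p \<Longrightarrow> t \<in> {0..1} \<Longrightarrow> p t \<in> X"
  unfolding lpX_def path_image_def by auto

lemma samp_clf:
  assumes "samp \<sigma> \<kappa> p n ys qs"
  shows "clf Y n qs" "pathstart (Jf n qs) = b" "pathfinish (Jf n qs) = b"
    "path (Jf n qs)" "path_image (Jf n qs) \<subseteq> Y"
proof -
  show c: "clf Y n qs" using assms unfolding samp_def clf_def by auto
  show "pathstart (Jf n qs) = b" "pathfinish (Jf n qs) = b"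
    using Jf_props(3,4)[OF c] assms unfolding samp_def by (auto simp: clf_def)
  show "path (Jf n qs)" "path_image (Jf n qs) \<subseteq> Y" using Jf_props(1,2)[OF c] by auto
qed

lemma samp_cong:
  assumes "samp \<sigma> \<kappa> p n ys qs" "\<And>t. t \<in> {0..1} \<Longrightarrow> p' t = p t"
  shows "samp \<sigma> \<kappa> p' n ys qs"
proof -
  have n: "0 < n" using assms(1) by (simp add: samp_def)
  have 1: "p' (real i / real n) = p (real i / real n)" if "i \<le> n" for i
    using assms(2) frac01[OF that n] by simp
  have 2: "p' ` {real i / real n..real (Suc i) / real n} = p ` {real i / real n..real (Suc i) / real n}" if "i < n" for i
  proof -
    have sub: "{real i / real n..real (Suc i) / real n} \<subseteq> {0..1}"
      using frac01[of i n] frac01[of "Suc i" n] that n by auto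
    show ?thesis by (intro image_cong[OF refl]) (use int01[OF that] assms(2) in auto)
  qed
  show ?thesis using assms(1) 1 2 unfolding samp_def
    by (metis (no_types, lifting) less_imp_le_nat order.refl)
qed

lemma EX:
  assumes "lpX p" "0 < \<sigma>"
  shows "\<exists>N>0. \<forall>n\<ge>N. \<exists>ys qs. samp \<sigma> (\<sigma> + e + \<eta>) p n ys qs"
proof -
  have "uniformly_continuous_on {0..1} p"
    using assms(1) unfolding lpX_def path_def by (intro compact_uniformly_continuous) auto
  then obtain \<delta> where d: "\<delta> > 0" "\<And>x x'. x \<in> {0..1} \<Longrightarrow> x' \<in> {0..1} \<Longrightarrow> dist x' x < \<delta> \<Longrightarrow> dist (p x') (p x) < \<sigma>"
    unfolding uniformly_continuous_on_def using assms(2) by metis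
  obtain N :: nat where N: "1 / \<delta> < real N" using reals_Archimedean2 by blast
  then have N0: "0 < N" using d by (metis divide_pos_pos less_le_not_le of_nat_0_eq_iff order_refl zero_less_one not_gr_zero of_nat_le_0_iff less_le_trans)
  have Nd: "1 / real N < \<delta>" using N d N0 by (simp add: divide_simps mult.commute)
  have main: "\<exists>ys qs. samp \<sigma> (\<sigma> + e + \<eta>) p n ys qs" if "N \<le> n" for n
  proof -
    have n: "0 < n" using that N0 by simp
    have nd: "1 / real n < \<delta>"
    proof -
      have "1 / real n \<le> 1 / real N" using that N0 by (simp add: divide_simps)
      then show ?thesis using Nd by simp
    qed
    define ys where "ys i = (if i = 0 \<or> i = n then b else (SOME y. y \<in> Y \<and> C (p (real i / real n)) y))" for i
    define qs where "qs i = sh (ys i) (ys (Suc i))" for i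
    have p0: "p 0 = a" "p 1 = a" using assms(1) by (auto simp: lpX_def pathstart_def pathfinish_def)
    have ys: "ys i \<in> Y \<and> C (p (real i / real n)) (ys i)" if "i \<le> n" for i
    proof (cases "i = 0 \<or> i = n")
      case True
      then show ?thesis using p0 n bY Cab by (auto simp: ys_def)
    next
      case False
      have "p (real i / real n) \<in> X" using lpX_in[OF assms(1) frac01[OF that n]] .
      then have ex: "\<exists>y. y \<in> Y \<and> C (p (real i / real n)) y" using tot by blast
      show ?thesis using False someI_ex[OF ex] by (simp add: ys_def)
    qed
    have pc: "p ` {real i / real n..real (Suc i) / real n} \<subseteq> ball (p (real i / real n)) \<sigma>" if "i < n" for i
    proof
      fix z assume "z \<in> p ` {real i / real n..real (Suc i) / real n}"
      then obtain t where t: "t \<in> {real i / real n..real (Suc i) / real n}" "z = p t" by auto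
      have t01: "t \<in> {0..1}" using int01[OF that t(1)] .
      have "dist t (real i / real n) \<le> 1 / real n"
        using t by (auto simp: dist_real_def add_divide_distrib)
      then have "dist t (real i / real n) < \<delta>" using nd by simp
      then have "dist (p t) (p (real i / real n)) < \<sigma>" using d(2)[OF frac01[of i n] t01] that n by simp
      then show "z \<in> ball (p (real i / real n)) \<sigma>" using t by (simp add: dist_commute)
    qed
    have qs: "path (qs i) \<and> path_image (qs i) \<subseteq> Y \<and> path_image (qs i) \<subseteq> ball (ys i) (\<sigma> + e + \<eta>) \<and>
            pathstart (qs i) = ys i \<and> pathfinish (qs i) = ys (Suc i)" if "i < n" for i
    proof -
      have Y: "ys i \<in> Y" "ys (Suc i) \<in> Y" using ys that by auto
      have mem: "real (Suc i) / real n \<in> {real i / real n..real (Suc i) / real n}" using n by (auto simp: divide_simps)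
      have "p (real (Suc i) / real n) \<in> ball (p (real i / real n)) \<sigma>" using pc[OF that] mem by blast
      then have "dist (p (real i / real n)) (p (real (Suc i) / real n)) < \<sigma>" by (simp only: mem_ball)
      moreover have "dist (ys i) (ys (Suc i)) \<le> dist (p (real i / real n)) (p (real (Suc i) / real n)) + e"
        using CY ys[of i] ys[of "Suc i"] that lpX_in[OF assms(1) frac01[of i n]] lpX_in[OF assms(1) frac01[of "Suc i" n]] n
        by auto
      ultimately have "dist (ys i) (ys (Suc i)) + \<eta> \<le> \<sigma> + e + \<eta>" by simp
      then have "ball (ys i) (dist (ys i) (ys (Suc i)) + \<eta>) \<subseteq> ball (ys i) (\<sigma> + e + \<eta>)" by (rule ball_mono')
      then show ?thesis using sh[OF Y] unfolding qs_def by blast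
    qed
    have "samp \<sigma> (\<sigma> + e + \<eta>) p n ys qs"
      unfolding samp_def using n ys pc qs by (auto simp: ys_def)
    then show ?thesis by blast
  qed
  show ?thesis using N0 main by blast
qed

end

context corr begin

lemma K_rho: "K < \<rho>" "0 < K" using rho eta e0 by (auto simp: K_def)

lemma samp_D:
  assumes "samp \<sigma> \<kappa> p n ys qs"
  shows "0 < n" "\<And>i. i \<le> n \<Longrightarrow> ys i \<in> Y" "\<And>i. i \<le> n \<Longrightarrow> C (p (real i / real n)) (ys i)"
    "ys 0 = b" "ys n = b"
    "\<And>i. i < n \<Longrightarrow> p ` {real i / real n..real (Suc i) / real n} \<subseteq> ball (p (real i / real n)) \<sigma>"
    "\<And>i. i < n \<Longrightarrow> path (qs i)" "\<And>i. i < n \<Longrightarrow> path_image (qs i) \<subseteq> Y"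
    "\<And>i. i < n \<Longrightarrow> path_image (qs i) \<subseteq> ball (ys i) \<kappa>"
    "\<And>i. i < n \<Longrightarrow> pathstart (qs i) = ys i" "\<And>i. i < n \<Longrightarrow> pathfinish (qs i) = ys (Suc i)"
  using assms unfolding samp_def by auto

lemma samp_dist:
  assumes "lpX p" "samp \<sigma> \<kappa> p n ys qs" "i < n" "t \<in> {real i / real n..real (Suc i) / real n}"
    "y \<in> Y" "C (p t) y"
  shows "dist (ys i) y < \<sigma> + e"
proof -
  have n: "0 < n" using samp_D(1)[OF assms(2)] .
  have "p t \<in> ball (p (real i / real n)) \<sigma>" using samp_D(6)[OF assms(2) assms(3)] assms(4) by blast
  then have d: "dist (p (real i / real n)) (p t) < \<sigma>" by (simp only: mem_ball)
  have xi: "p (real i / real n) \<in> X" using lpX_in[OF assms(1) frac01[of i n]] assms(3) by simp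
  have xt: "p t \<in> X" using lpX_in[OF assms(1) int01[OF assms(3,4)]] .
  have "dist (ys i) y \<le> dist (p (real i / real n)) (p t) + e"
    using CY[OF samp_D(3)[OF assms(2)] assms(6) xi xt samp_D(2)[OF assms(2)] assms(5)] assms(3) by simp
  then show ?thesis using d by simp
qed

lemma BR:
  assumes p: "lpX p" and s1: "samp \<sigma> \<kappa> p n ys qs" and s2: "samp \<sigma>' \<kappa>' p (n * m) ws ps" and m: "0 < m"
    and sK: "\<sigma> \<le> K" and kK: "\<kappa> \<le> K" and k'K: "\<kappa>' \<le> K"
  shows "homotopic_paths Y (Jf n qs) (Jf (n * m) ps)"
proof -
  have n: "0 < n" using samp_D(1)[OF s1] .
  have nm: "0 < n * m" using n m by simp
  have cP: "clf Y (n * m) ps" using samp_clf(1)[OF s2] .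
  have cQ: "clf Y n qs" using samp_clf(1)[OF s1] .
  define B where "B i = Jf m (\<lambda>j. ps (i * m + j))" for i
  define r where "r i = sh (ys i) (ws (i * m))" for i
  have wsi: "ws (i * m) \<in> Y" "C (p (real i / real n)) (ws (i * m))" if "i \<le> n" for i
  proof -
    have "i * m \<le> n * m" using that by simp
    then show "ws (i * m) \<in> Y" "C (p (real i / real n)) (ws (i * m))"
      using samp_D(2,3)[OF s2, of "i * m"] frac_mult[OF m, of i n] by auto
  qed
  have xin: "p (real i / real n) \<in> X" if "i \<le> n" for i using lpX_in[OF p frac01[OF that n]] .
  have dr: "dist (ys i) (ws (i * m)) \<le> e" if "i \<le> n" for i
    using CY[OF samp_D(3)[OF s1 that] wsi(2)[OF that] xin[OF that] xin[OF that] samp_D(2)[OF s1 that] wsi(1)[OF that]]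
    by simp
  have rp: "path (r i)" "path_image (r i) \<subseteq> Y" "path_image (r i) \<subseteq> ball (ys i) (e + \<eta>)"
     "pathstart (r i) = ys i" "pathfinish (r i) = ws (i * m)" if "i \<le> n" for i
  proof -
    have Y: "ys i \<in> Y" "ws (i * m) \<in> Y" using samp_D(2)[OF s1 that] wsi(1)[OF that] by auto
    show "path (r i)" "path_image (r i) \<subseteq> Y" "pathstart (r i) = ys i" "pathfinish (r i) = ws (i * m)"
      using sh[OF Y] unfolding r_def by auto
    have "ball (ys i) (dist (ys i) (ws (i * m)) + \<eta>) \<subseteq> ball (ys i) (e + \<eta>)"
      using dr[OF that] by (intro ball_mono') simp
    then show "path_image (r i) \<subseteq> ball (ys i) (e + \<eta>)" using sh(3)[OF Y] unfolding r_def by blast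
  qed
  have cB: "clf Y n B" unfolding B_def by (rule clf_blocks[OF cP n])
  have Bends: "pathstart (B i) = ws (i * m)" "pathfinish (B i) = ws (Suc i * m)" if "i < n" for i
  proof -
    have k1: "i * m < n * m" using mult_less_mono1[OF that m] .
    have e1: "Suc (i * m + (m - 1)) = Suc i * m" using m by simp
    have k2: "i * m + (m - 1) < n * m" using mult_less_mono1[OF that m] m
      by (metis Suc_le_eq e1 mult_le_mono1 Suc_leI \<open>i < n\<close>)
    show "pathstart (B i) = ws (i * m)"
      using block_ends(1)[OF cP that] samp_D(10)[OF s2 k1] unfolding B_def by simp
    show "pathfinish (B i) = ws (Suc i * m)"
      using block_ends(2)[OF cP that] samp_D(11)[OF s2 k2] e1 unfolding B_def by (simp add: add.commute)
  qed
  have Bimg: "path_image (B i) \<subseteq> ball (ys i) (\<sigma> + e + \<kappa>')" if "i < n" for i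
  proof -
    have "path_image (ps (i * m + j)) \<subseteq> ball (ys i) (\<sigma> + e + \<kappa>')" if "j < m" for j
    proof -
      have k: "i * m + j < n * m"
      proof -
        have "i * m + j < Suc i * m" using that by simp
        also have "Suc i * m \<le> n * m" using \<open>i < n\<close> by (intro mult_le_mono1) simp
        finally show ?thesis .
      qed
      have t: "real (i * m + j) / real (n * m) \<in> {real i / real n..real (Suc i) / real n}"
        using frac_block[OF n m, of j i] that by auto
      have "dist (ys i) (ws (i * m + j)) < \<sigma> + e"
        using samp_dist[OF p s1 \<open>i < n\<close> t samp_D(2)[OF s2] samp_D(3)[OF s2]] k by simp
      then have "ball (ws (i * m + j)) \<kappa>' \<subseteq> ball (ys i) (\<sigma> + e + \<kappa>')" by (rule ball_trans)
      then show ?thesis using samp_D(9)[OF s2 k] by blast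
    qed
    then show ?thesis using Jf_image[OF m, of "\<lambda>j. ps (i * m + j)"] unfolding B_def by blast
  qed
  have dnext: "dist (ys i) (ys (Suc i)) < \<sigma> + e" if "i < n" for i
  proof -
    have t: "real (Suc i) / real n \<in> {real i / real n..real (Suc i) / real n}" by (auto simp: divide_simps)
    show ?thesis using samp_dist[OF p s1 that t samp_D(2)[OF s1] samp_D(3)[OF s1]] that by simp
  qed
  have sq: "homotopic_paths Y (qs i +++ r (Suc i)) (r i +++ B i)" if "i < n" for i
  proof -
    have i1: "Suc i \<le> n" "i \<le> n" using that by auto
    have ys: "ys i \<in> Y" using samp_D(2)[OF s1 i1(2)] .
    have b1: "path_image (qs i) \<subseteq> ball (ys i) \<rho>"
      using samp_D(9)[OF s1 that] ball_mono'[of \<kappa> \<rho> "ys i"] kK K_rho by auto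
    have b2: "path_image (r (Suc i)) \<subseteq> ball (ys i) \<rho>"
    proof -
      have "ball (ys (Suc i)) (e + \<eta>) \<subseteq> ball (ys i) (\<sigma> + e + (e + \<eta>))" using dnext[OF that] by (rule ball_trans)
      moreover have "ball (ys i) (\<sigma> + e + (e + \<eta>)) \<subseteq> ball (ys i) \<rho>"
        using sK rho eta unfolding K_def by (intro ball_mono') simp
      ultimately show ?thesis using rp(3)[OF i1(1)] by blast
    qed
    have b3: "path_image (r i) \<subseteq> ball (ys i) \<rho>"
    proof -
      have "ball (ys i) (e + \<eta>) \<subseteq> ball (ys i) \<rho>" using rho eta e0 by (intro ball_mono') simp
      then show ?thesis using rp(3)[OF i1(2)] by blast
    qed
    have b4: "path_image (B i) \<subseteq> ball (ys i) \<rho>"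
    proof -
      have "ball (ys i) (\<sigma> + e + \<kappa>') \<subseteq> ball (ys i) \<rho>" using sK k'K rho unfolding K_def by (intro ball_mono') simp
      then show ?thesis using Bimg[OF that] by blast
    qed
    have pB: "path (B i)" "path_image (B i) \<subseteq> Y" using cB that by (auto simp: clf_def)
    show ?thesis
    proof (rule SQ'[OF goodY ys])
      show "path (qs i +++ r (Suc i))"
        using samp_D(7,11)[OF s1 that] rp(1,4)[OF i1(1)] by simp
      show "path (r i +++ B i)" using rp(1,5)[OF i1(2)] pB Bends[OF that] by simp
      show "path_image (qs i +++ r (Suc i)) \<subseteq> Y"
        using path_image_join_subset[of "qs i" "r (Suc i)"] samp_D(8)[OF s1 that] rp(2)[OF i1(1)] by blast
      show "path_image (qs i +++ r (Suc i)) \<subseteq> ball (ys i) \<rho>"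
        using path_image_join_subset[of "qs i" "r (Suc i)"] b1 b2 by blast
      show "path_image (r i +++ B i) \<subseteq> Y"
        using path_image_join_subset[of "r i" "B i"] rp(2)[OF i1(2)] pB by blast
      show "path_image (r i +++ B i) \<subseteq> ball (ys i) \<rho>"
        using path_image_join_subset[of "r i" "B i"] b3 b4 by blast
      show "pathstart (qs i +++ r (Suc i)) = pathstart (r i +++ B i)"
        using samp_D(10)[OF s1 that] rp(4)[OF i1(2)] by simp
      show "pathfinish (qs i +++ r (Suc i)) = pathfinish (r i +++ B i)"
        using rp(5)[OF i1(1)] Bends(2)[OF that] by simp
    qed
  qed
  have r0: "r 0 = sh b b" using samp_D(4)[OF s1] samp_D(4)[OF s2] unfolding r_def by simp
  have rn: "r n = sh b b" using samp_D(5)[OF s1] samp_D(5)[OF s2] unfolding r_def by simp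
  have L: "homotopic_paths Y (Jf n qs) (Jf n B)"
  proof (rule ladder0[OF cQ cB])
    show "path (r i) \<and> path_image (r i) \<subseteq> Y" if "i \<le> n" for i using rp(1,2)[OF that] by simp
    show "pathstart (r i) = pathstart (qs i) \<and> pathfinish (r i) = pathstart (B i) \<and>
          pathstart (r (Suc i)) = pathfinish (qs i) \<and> pathfinish (r (Suc i)) = pathfinish (B i)" if "i < n" for i
      using rp(4,5)[of i] rp(4,5)[of "Suc i"] that samp_D(10,11)[OF s1 that] Bends[OF that] by simp
    show "homotopic_paths Y (qs i +++ r (Suc i)) (r i +++ B i)" if "i < n" for i using sq[OF that] .
    show "homotopic_paths Y (r 0) (cp (pathstart (r 0)))" using sh_null[OF bY] sh(4)[OF bY bY] r0 by simp
    show "homotopic_paths Y (r n) (cp (pathstart (r n)))" using sh_null[OF bY] sh(4)[OF bY bY] rn by simp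
  qed
  have "homotopic_paths Y (Jf (n * m) ps) (Jf n B)" unfolding B_def by (rule Jf_blocks[OF cP n m])
  then show ?thesis using L by (meson homotopic_paths_sym homotopic_paths_trans)
qed

end

lemma dist_pair_le: "dist ((s::real), (t::real)) (s', t') \<le> \<bar>s - s'\<bar> + \<bar>t - t'\<bar>"
  unfolding dist_Pair_Pair dist_real_def using sqrt_sum_squares_le_sum_abs[of "s - s'" "t - t'"] by simp

context corr begin

lemma CYlt:
  assumes "C x y" "C x' y'" "x \<in> X" "x' \<in> X" "y \<in> Y" "y' \<in> Y" "dist x x' < d"
  shows "dist y y' < d + e"
  using CY[OF assms(1-6)] assms(7) by simp

lemma W:
  assumes p: "lpX p" and p': "lpX p'" and h: "homotopic_paths X p p'"
    and s1: "samp \<sigma> \<kappa> p n ys qs" and s2: "samp \<sigma>' \<kappa>' p' n' ys' qs'"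
    and K1: "\<sigma> \<le> K" "\<kappa> \<le> K" "\<sigma>' \<le> K" "\<kappa>' \<le> K"
  shows "homotopic_paths Y (Jf n qs) (Jf n' qs')"
proof -
  have n: "0 < n" using samp_D(1)[OF s1] .
  have n': "0 < n'" using samp_D(1)[OF s2] .
  obtain H :: "real \<times> real \<Rightarrow> 'a" where HH: "continuous_on ({0..1} \<times> {0..1}) H \<and> H \<in> ({0..1} \<times> {0..1}) \<rightarrow> X \<and>
    (\<forall>x\<in>{0..1}. H (0, x) = p x) \<and> (\<forall>x\<in>{0..1}. H (1, x) = p' x) \<and>
    (\<forall>t\<in>{0..1}. pathstart (H \<circ> Pair t) = pathstart p \<and> pathfinish (H \<circ> Pair t) = pathfinish p)"
    using h unfolding homotopic_paths by auto
  have Hc: "continuous_on ({0..1} \<times> {0..1}) H" and HX: "H \<in> ({0..1} \<times> {0..1}) \<rightarrow> X"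
    and H0: "\<And>x. x \<in> {0..1} \<Longrightarrow> H (0, x) = p x" and H1: "\<And>x. x \<in> {0..1} \<Longrightarrow> H (1, x) = p' x"
    and He: "\<And>t. t \<in> {0..1} \<Longrightarrow> pathstart (H \<circ> Pair t) = pathstart p \<and> pathfinish (H \<circ> Pair t) = pathfinish p"
    using HH by auto
  have pa: "pathstart p = a" "pathfinish p = a" using p by (auto simp: lpX_def)
  have Hends: "H (t, 0) = a" "H (t, 1) = a" if "t \<in> {0..1}" for t
    using He[OF that] pa by (auto simp: pathstart_def pathfinish_def)
  have "uniformly_continuous_on ({0..1} \<times> {0..1}) H"
    by (rule compact_uniformly_continuous[OF Hc]) (intro compact_Times compact_Icc)
  then obtain \<delta> where d: "\<delta> > 0" and dH: "\<And>z z'. z \<in> {0..1} \<times> {0..1} \<Longrightarrow> z' \<in> {0..1} \<times> {0..1} \<Longrightarrow>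
        dist z' z < \<delta> \<Longrightarrow> dist (H z') (H z) < \<eta>"
    unfolding uniformly_continuous_on_def using eta by metis
  obtain L :: nat where L: "2 / \<delta> < real L" using reals_Archimedean2 by blast
  have L0: "0 < L"
  proof -
    have "0 < 2 / \<delta>" using d by simp
    then have "0 < real L" using L by linarith
    then show ?thesis by simp
  qed
  define M where "M = n * (n' * L)"
  have M0: "0 < M" using n n' L0 by (simp add: M_def)
  have hML: "L \<le> M" using n n' by (simp add: M_def)
  have Md: "2 / real M < \<delta>"
  proof -
    have "2 / real M \<le> 2 / real L" using hML L0 by (simp add: divide_simps)
    also have "\<dots> < \<delta>" using L d L0 by (simp add: divide_simps mult.commute)
    finally show ?thesis .
  qed
  have cell: "dist (H (s, t)) (H (s', t')) < \<eta>"
    if "s \<in> {0..1}" "t \<in> {0..1}" "s' \<in> {0..1}" "t' \<in> {0..1}" "\<bar>s - s'\<bar> \<le> 1 / real M" "\<bar>t - t'\<bar> \<le> 1 / real M"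
    for s t s' t'
  proof -
    have "dist (s, t) (s', t') \<le> 1 / real M + 1 / real M"
      using dist_pair_le[of s t s' t'] that by simp
    also have "\<dots> = 2 / real M" by simp
    finally have "dist (s, t) (s', t') < \<delta>" using Md by simp
    then show ?thesis using dH[of "(s', t')" "(s, t)"] that by (simp add: dist_commute)
  qed
  define hv where "hv k j = H (real k / real M, real j / real M)" for k j
  have hvX: "hv k j \<in> X" if "k \<le> M" "j \<le> M" for k j
    using HX frac01[OF that(1) M0] frac01[OF that(2) M0] unfolding hv_def by auto
  define z where "z k j = (if j = 0 \<or> j = M then b else (SOME y. y \<in> Y \<and> C (hv k j) y))" for k j
  have z: "z k j \<in> Y \<and> C (hv k j) (z k j)" if "k \<le> M" "j \<le> M" for k j
  proof (cases "j = 0 \<or> j = M")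
    case True
    then have "hv k j = a" using Hends[OF frac01[OF that(1) M0]] M0 unfolding hv_def by auto
    then show ?thesis using True bY Cab by (auto simp: z_def)
  next
    case False
    have ex: "\<exists>y. y \<in> Y \<and> C (hv k j) y" using tot[OF hvX[OF that]] by blast
    show ?thesis using False someI_ex[OF ex] by (simp add: z_def)
  qed
  define rs where "rs k j = sh (z k j) (z k (Suc j))" for k j
  define row where "row k = (\<lambda>t. H (real k / real M, t))" for k
  have hvclose: "dist (hv k j) (hv k' j') < \<eta>"
    if "k \<le> M" "j \<le> M" "k' \<le> M" "j' \<le> M" "k' \<le> Suc k" "k \<le> Suc k'" "j' \<le> Suc j" "j \<le> Suc j'" for k j k' j'
  proof -
    have "\<bar>real k / real M - real k' / real M\<bar> \<le> 1 / real M"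
      using that M0 by (auto simp: divide_simps abs_le_iff)
    moreover have "\<bar>real j / real M - real j' / real M\<bar> \<le> 1 / real M"
      using that M0 by (auto simp: divide_simps abs_le_iff)
    ultimately show ?thesis unfolding hv_def
      using cell frac01 that M0 by blast
  qed
  have zclose: "dist (z k j) (z k' j') < \<eta> + e"
    if "k \<le> M" "j \<le> M" "k' \<le> M" "j' \<le> M" "k' \<le> Suc k" "k \<le> Suc k'" "j' \<le> Suc j" "j \<le> Suc j'" for k j k' j'
    using CYlt[of "hv k j" "z k j" "hv k' j'" "z k' j'" \<eta>] z[of k j] z[of k' j'] hvX[of k j] hvX[of k' j']
      hvclose[OF that] that by simp
  have rowlp: "lpX (row k)" if "k \<le> M" for k
  proof -
    have k01: "real k / real M \<in> {0..1}" using frac01[OF that M0] .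
    have "continuous_on {0..1} (H \<circ> (\<lambda>t. (real k / real M, t)))"
      by (rule continuous_on_compose[OF _ continuous_on_subset[OF Hc]]) (use k01 in \<open>auto intro!: continuous_intros\<close>)
    then have "path (row k)" unfolding path_def row_def o_def .
    moreover have "path_image (row k) \<subseteq> X" using HX k01 unfolding path_image_def row_def by auto
    ultimately show ?thesis using Hends[OF k01] unfolding lpX_def row_def pathstart_def pathfinish_def by simp
  qed
  have rowsamp: "samp \<eta> K (row k) M (z k) (rs k)" if "k \<le> M" for k
  proof -
    have A: "\<forall>i\<le>M. z k i \<in> Y \<and> C (row k (real i / real M)) (z k i)"
      using z that unfolding row_def hv_def by simp
    have B: "row k ` {real i / real M..real (Suc i) / real M} \<subseteq> ball (row k (real i / real M)) \<eta>" if "i < M" for i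
    proof
      fix w assume "w \<in> row k ` {real i / real M..real (Suc i) / real M}"
      then obtain t where t: "t \<in> {real i / real M..real (Suc i) / real M}" "w = row k t" by auto
      have t01: "t \<in> {0..1}" using int01[OF that t(1)] .
      have "\<bar>real k / real M - real k / real M\<bar> \<le> 1 / real M" by simp
      moreover have "\<bar>real i / real M - t\<bar> \<le> 1 / real M" using t by (auto simp: abs_le_iff add_divide_distrib)
      ultimately have "dist (H (real k / real M, real i / real M)) (H (real k / real M, t)) < \<eta>"
        using cell frac01[OF \<open>k \<le> M\<close> M0] frac01[of i M] that t01 M0 by simp
      then show "w \<in> ball (row k (real i / real M)) \<eta>" using t unfolding row_def by simp
    qed
    have Cq: "path (rs k i) \<and> path_image (rs k i) \<subseteq> Y \<and> path_image (rs k i) \<subseteq> ball (z k i) K \<and>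
            pathstart (rs k i) = z k i \<and> pathfinish (rs k i) = z k (Suc i)" if "i < M" for i
    proof -
      have Yz: "z k i \<in> Y" "z k (Suc i) \<in> Y" using z \<open>k \<le> M\<close> that by auto
      have "dist (z k i) (z k (Suc i)) < \<eta> + e" using zclose[of k i k "Suc i"] \<open>k \<le> M\<close> that by simp
      then have "ball (z k i) (dist (z k i) (z k (Suc i)) + \<eta>) \<subseteq> ball (z k i) K"
        unfolding K_def by (intro ball_mono') simp
      then show ?thesis using sh[OF Yz] unfolding rs_def by blast
    qed
    show ?thesis unfolding samp_def using M0 A B Cq by (simp add: z_def)
  qed
  have rowsq: "homotopic_paths Y (Jf M (rs k)) (Jf M (rs (Suc k)))" if "k < M" for k
  proof -
    have k1: "k \<le> M" "Suc k \<le> M" using that by auto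
    define r where "r j = sh (z k j) (z (Suc k) j)" for j
    have cA: "clf Y M (rs k)" using samp_clf(1)[OF rowsamp[OF k1(1)]] .
    have cB: "clf Y M (rs (Suc k))" using samp_clf(1)[OF rowsamp[OF k1(2)]] .
    have rp: "path (r j)" "path_image (r j) \<subseteq> Y" "path_image (r j) \<subseteq> ball (z k j) K"
      "pathstart (r j) = z k j" "pathfinish (r j) = z (Suc k) j" if "j \<le> M" for j
    proof -
      have Yz: "z k j \<in> Y" "z (Suc k) j \<in> Y" using z k1 that by auto
      show "path (r j)" "path_image (r j) \<subseteq> Y" "pathstart (r j) = z k j" "pathfinish (r j) = z (Suc k) j"
        using sh[OF Yz] unfolding r_def by auto
      have "dist (z k j) (z (Suc k) j) < \<eta> + e" using zclose[of k j "Suc k" j] k1 that by simp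
      then have "ball (z k j) (dist (z k j) (z (Suc k) j) + \<eta>) \<subseteq> ball (z k j) K"
        unfolding K_def by (intro ball_mono') simp
      then show "path_image (r j) \<subseteq> ball (z k j) K" using sh(3)[OF Yz] unfolding r_def by blast
    qed
    have rsk: "path (rs k' j)" "path_image (rs k' j) \<subseteq> Y" "path_image (rs k' j) \<subseteq> ball (z k' j) K"
      "pathstart (rs k' j) = z k' j" "pathfinish (rs k' j) = z k' (Suc j)" if "k' \<le> M" "j < M" for k' j
      using samp_D(7-11)[OF rowsamp[OF that(1)] that(2)] by auto
    have R: "2 * \<eta> + 2 * e + \<eta> < \<rho>" using rho eta e0 by simp
    have sq: "homotopic_paths Y (rs k j +++ r (Suc j)) (r j +++ rs (Suc k) j)" if "j < M" for j
    proof -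
      have j1: "j \<le> M" "Suc j \<le> M" using that by auto
      have zY: "z k j \<in> Y" using z k1 j1 by auto
      have big: "ball (z k j) K \<subseteq> ball (z k j) \<rho>" using K_rho by (intro ball_mono') simp
      have b2: "path_image (r (Suc j)) \<subseteq> ball (z k j) \<rho>"
      proof -
        have "dist (z k j) (z k (Suc j)) < \<eta> + e" using zclose[of k j k "Suc j"] k1 j1 by simp
        then have "ball (z k (Suc j)) K \<subseteq> ball (z k j) (\<eta> + e + K)" by (rule ball_trans)
        moreover have "ball (z k j) (\<eta> + e + K) \<subseteq> ball (z k j) \<rho>" using R unfolding K_def by (intro ball_mono') simp
        ultimately show ?thesis using rp(3)[OF j1(2)] by blast
      qed
      have b4: "path_image (rs (Suc k) j) \<subseteq> ball (z k j) \<rho>"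
      proof -
        have "dist (z k j) (z (Suc k) j) < \<eta> + e" using zclose[of k j "Suc k" j] k1 j1 by simp
        then have "ball (z (Suc k) j) K \<subseteq> ball (z k j) (\<eta> + e + K)" by (rule ball_trans)
        moreover have "ball (z k j) (\<eta> + e + K) \<subseteq> ball (z k j) \<rho>" using R unfolding K_def by (intro ball_mono') simp
        ultimately show ?thesis using rsk(3)[OF k1(2) that] by blast
      qed
      show ?thesis
      proof (rule SQ'[OF goodY zY])
        show "path (rs k j +++ r (Suc j))" using rsk(1,5)[OF k1(1) that] rp(1,4)[OF j1(2)] by simp
        show "path (r j +++ rs (Suc k) j)" using rp(1,5)[OF j1(1)] rsk(1,4)[OF k1(2) that] by simp
        show "path_image (rs k j +++ r (Suc j)) \<subseteq> Y"
          using path_image_join_subset[of "rs k j" "r (Suc j)"] rsk(2)[OF k1(1) that] rp(2)[OF j1(2)] by blast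
        show "path_image (rs k j +++ r (Suc j)) \<subseteq> ball (z k j) \<rho>"
          using path_image_join_subset[of "rs k j" "r (Suc j)"] rsk(3)[OF k1(1) that] big b2 by blast
        show "path_image (r j +++ rs (Suc k) j) \<subseteq> Y"
          using path_image_join_subset[of "r j" "rs (Suc k) j"] rp(2)[OF j1(1)] rsk(2)[OF k1(2) that] by blast
        show "path_image (r j +++ rs (Suc k) j) \<subseteq> ball (z k j) \<rho>"
          using path_image_join_subset[of "r j" "rs (Suc k) j"] rp(3)[OF j1(1)] big b4 by blast
        show "pathstart (rs k j +++ r (Suc j)) = pathstart (r j +++ rs (Suc k) j)"
          using rsk(4)[OF k1(1) that] rp(4)[OF j1(1)] by simp
        show "pathfinish (rs k j +++ r (Suc j)) = pathfinish (r j +++ rs (Suc k) j)"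
          using rp(5)[OF j1(2)] rsk(5)[OF k1(2) that] by simp
      qed
    qed
    have r0: "r 0 = sh b b" "r M = sh b b" unfolding r_def z_def by auto
    show ?thesis
    proof (rule ladder0[OF cA cB])
      show "path (r i) \<and> path_image (r i) \<subseteq> Y" if "i \<le> M" for i using rp(1,2)[OF that] by simp
      show "pathstart (r i) = pathstart (rs k i) \<and> pathfinish (r i) = pathstart (rs (Suc k) i) \<and>
          pathstart (r (Suc i)) = pathfinish (rs k i) \<and> pathfinish (r (Suc i)) = pathfinish (rs (Suc k) i)" if "i < M" for i
        using rp(4,5)[of i] rp(4,5)[of "Suc i"] that rsk(4,5)[OF k1(1) that] rsk(4,5)[OF k1(2) that] by simp
      show "homotopic_paths Y (rs k i +++ r (Suc i)) (r i +++ rs (Suc k) i)" if "i < M" for i using sq[OF that] .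
      show "homotopic_paths Y (r 0) (cp (pathstart (r 0)))" using sh_null[OF bY] sh(4)[OF bY bY] r0 by simp
      show "homotopic_paths Y (r M) (cp (pathstart (r M)))" using sh_null[OF bY] sh(4)[OF bY bY] r0 by simp
    qed
  qed
  have chain: "homotopic_paths Y (Jf M (rs 0)) (Jf M (rs k))" if "k \<le> M" for k
    using that
  proof (induction k)
    case 0
    show ?case using samp_clf(4,5)[OF rowsamp[of 0]] by simp
  next
    case (Suc k)
    then show ?case using rowsq[of k] homotopic_paths_trans by simp
  qed
  have s0: "samp \<eta> K p M (z 0) (rs 0)"
    by (rule samp_cong[OF rowsamp[of 0]]) (use H0 in \<open>auto simp: row_def\<close>)
  have sM: "samp \<eta> K p' M (z M) (rs M)"
    by (rule samp_cong[OF rowsamp[of M]]) (use H1 M0 in \<open>auto simp: row_def\<close>)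
  have nL: "0 < n' * L" "0 < n * L" using n n' L0 by auto
  have b1: "homotopic_paths Y (Jf n qs) (Jf M (rs 0))"
    using BR[OF p s1 _ nL(1) K1(1,2)] s0 unfolding M_def using eta unfolding K_def by auto
  have M2: "M = n' * (n * L)" unfolding M_def by (simp add: mult.left_commute)
  have b2: "homotopic_paths Y (Jf n' qs') (Jf M (rs M))"
    using BR[OF p' s2 _ nL(2) K1(3,4)] sM unfolding M2 using eta unfolding K_def by auto
  show ?thesis
    using b1 chain[of M] b2 by (meson homotopic_paths_sym homotopic_paths_trans order_refl)
qed

end

definition joinw :: "real \<Rightarrow> (real \<Rightarrow> 'a) \<Rightarrow> (real \<Rightarrow> 'a) \<Rightarrow> real \<Rightarrow> 'a" where
  "joinw l p q t = (if t \<le> l then p (t / l) else q ((t - l) / (1 - l)))"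

lemma JW:
  assumes l: "0 < l" "l < 1" and pq: "path p" "path q" "path_image p \<subseteq> S" "path_image q \<subseteq> S"
    "pathfinish p = pathstart q"
  shows "homotopic_paths S (p +++ q) (joinw l p q)"
proof -
  let ?f = "\<lambda>t. if t \<le> l then t / (2 * l) else 1/2 + (t - l) / (2 * (1 - l))"
  show ?thesis
  proof (rule homotopic_paths_reparametrize[where f = ?f])
    show "path (p +++ q)" using pq by simp
    show "path_image (p +++ q) \<subseteq> S" using pq path_image_join_subset[of p q] by blast
    have c1: "continuous_on {0..l} (\<lambda>t::real. t / (2 * l))" by (intro continuous_intros) (use l in auto)
    have c2: "continuous_on {l..1} (\<lambda>t::real. 1/2 + (t - l) / (2 * (1 - l)))" by (intro continuous_intros) (use l in auto)
    have b: "\<forall>t. (t \<in> {0..l} \<and> \<not> t \<le> l) \<or> (t \<in> {l..1} \<and> t \<le> l) \<longrightarrow>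
          t / (2 * l) = 1/2 + (t - l) / (2 * (1 - l))"
    proof (intro allI impI)
      fix t :: real assume "(t \<in> {0..l} \<and> \<not> t \<le> l) \<or> (t \<in> {l..1} \<and> t \<le> l)"
      then have "t = l" by auto
      then show "t / (2 * l) = 1/2 + (t - l) / (2 * (1 - l))" using l by simp
    qed
    have "{0..1} = {0..l} \<union> {l..1::real}" using l by auto
    then show "continuous_on {0..1} ?f"
      using continuous_on_cases[OF closed_atLeastAtMost closed_atLeastAtMost c1 c2 b] by simp
    show "?f \<in> {0..1} \<rightarrow> {0..1}"
    proof
      fix t :: real assume t: "t \<in> {0..1}"
      show "?f t \<in> {0..1}"
      proof (cases "t \<le> l")
        case True
        then show ?thesis using t l by (auto simp: divide_simps)
      next
        case False
        have "(t - l) / (2 * (1 - l)) \<le> 1/2" using t l by (auto simp: divide_simps)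
        moreover have "0 \<le> (t - l) / (2 * (1 - l))" using False l by auto
        ultimately have "0 \<le> 1/2 + (t - l) / (2 * (1 - l))" "1/2 + (t - l) / (2 * (1 - l)) \<le> 1" by linarith+
        moreover have eq: "?f t = 1/2 + (t - l) / (2 * (1 - l))" using False by simp
        ultimately show ?thesis unfolding eq atLeastAtMost_iff by blast
      qed
    qed
    show "?f 0 = 0" using l by simp
    show "?f 1 = 1" using l by (simp add: divide_simps)
    show "joinw l p q t = (p +++ q) (?f t)" if "t \<in> {0..1}" for t
    proof (cases "t \<le> l")
      case True
      have "t / (2 * l) \<le> 1/2" using True l by (simp add: divide_simps)
      moreover have "2 * (t / (2 * l)) = t / l" using l by simp
      ultimately show ?thesis using True unfolding joinw_def joinpaths_def by simp
    next
      case False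
      have "\<not> 1/2 + (t - l) / (2 * (1 - l)) \<le> 1/2" using False l by (simp add: divide_simps)
      moreover have "2 * (1/2 + (t - l) / (2 * (1 - l))) - 1 = (t - l) / (1 - l)" using l by (simp add: field_simps)
      ultimately show ?thesis using False unfolding joinw_def joinpaths_def by simp
    qed
  qed
qed

fun Rr :: "nat \<Rightarrow> (nat \<Rightarrow> real \<Rightarrow> 'a) \<Rightarrow> real \<Rightarrow> 'a" where
  "Rr 0 qs = qs 0"
| "Rr (Suc 0) qs = qs 0"
| "Rr (Suc (Suc n)) qs = joinw (1 / real (Suc (Suc n))) (qs 0) (Rr (Suc n) (\<lambda>i. qs (Suc i)))"

lemma clf_shift: "clf S (Suc n) a \<Longrightarrow> 0 < n \<Longrightarrow> clf S n (\<lambda>i. a (Suc i))"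
  by (auto simp: clf_def)

lemma Rr_hom:
  "clf S n qs \<Longrightarrow> homotopic_paths S (Jf n qs) (Rr n qs)"
proof (induction n qs rule: Rr.induct)
  case (1 qs) then show ?case by (simp add: clf_def)
next
  case (2 qs) then show ?case by (simp add: clf_def)
next
  case (3 n qs)
  have cs: "clf S (Suc n) (\<lambda>i. qs (Suc i))" using clf_shift[OF 3(2)] by simp
  have IH: "homotopic_paths S (Jf (Suc n) (\<lambda>i. qs (Suc i))) (Rr (Suc n) (\<lambda>i. qs (Suc i)))"
    using 3(1) cs by simp
  have q0: "path (qs 0)" "path_image (qs 0) \<subseteq> S" "pathfinish (qs 0) = pathstart (qs 1)"
    using 3(2) by (auto simp: clf_def)
  have jp: "path (Jf (Suc n) (\<lambda>i. qs (Suc i)))" "path_image (Jf (Suc n) (\<lambda>i. qs (Suc i))) \<subseteq> S"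
    "pathstart (Jf (Suc n) (\<lambda>i. qs (Suc i))) = pathstart (qs 1)"
    using Jf_props[OF cs] by auto
  have rp: "path (Rr (Suc n) (\<lambda>i. qs (Suc i)))" "path_image (Rr (Suc n) (\<lambda>i. qs (Suc i))) \<subseteq> S"
    "pathstart (Rr (Suc n) (\<lambda>i. qs (Suc i))) = pathstart (qs 1)"
    using homotopic_paths_imp_path[OF IH] homotopic_paths_imp_subset[OF IH]
      homotopic_paths_imp_pathstart[OF IH] jp by auto
  have "homotopic_paths S (Jf (Suc (Suc n)) qs) (Jf 1 qs +++ Jf (Suc n) (\<lambda>i. qs (1 + i)))"
    using Jf_add[of S 1 "Suc n" qs] 3(2) by simp
  also have "Jf 1 qs +++ Jf (Suc n) (\<lambda>i. qs (1 + i)) = qs 0 +++ Jf (Suc n) (\<lambda>i. qs (Suc i))" by simp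
  also have "homotopic_paths S \<dots> (qs 0 +++ Rr (Suc n) (\<lambda>i. qs (Suc i)))"
    by (rule homotopic_paths_join) (use q0 jp IH in auto)
  also have "homotopic_paths S \<dots> (joinw (1 / real (Suc (Suc n))) (qs 0) (Rr (Suc n) (\<lambda>i. qs (Suc i))))"
    by (rule JW) (use q0 rp in \<open>auto simp: divide_simps\<close>)
  finally show ?case by simp
qed

lemma Rr_piece:
  "(\<And>k. Suc k < n \<Longrightarrow> qs k 1 = qs (Suc k) 0) \<Longrightarrow> k < n \<Longrightarrow> real k / real n \<le> t \<Longrightarrow> t \<le> real (Suc k) / real n
   \<Longrightarrow> Rr n qs t = qs k (real n * t - real k)"
proof (induction n qs arbitrary: k t rule: Rr.induct)
  case (1 qs) then show ?case by simp
next
  case (2 qs) then show ?case by simp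
next
  case (3 n qs)
  let ?N = "real (Suc (Suc n))"
  have N: "0 < ?N" by simp
  show ?case
  proof (cases "t \<le> 1 / ?N")
    case True
    then have "Rr (Suc (Suc n)) qs t = qs 0 (?N * t)" by (simp add: joinw_def mult.commute)
    show ?thesis
    proof (cases "k = 0")
      case True
      then show ?thesis using \<open>Rr (Suc (Suc n)) qs t = qs 0 (?N * t)\<close> by simp
    next
      case False
      have "real k / ?N \<le> 1 / ?N" using 3(4) True by linarith
      then have "k \<le> 1" by (simp add: divide_simps)
      then have k1: "k = 1" using False by simp
      have "t = 1 / ?N" using 3(4) True k1 by simp
      then have "?N * t = 1" by simp
      then show ?thesis using \<open>Rr (Suc (Suc n)) qs t = qs 0 (?N * t)\<close> k1 3(2)[of 0] by simp
    qed
  next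
    case False
    have k0: "k \<noteq> 0"
    proof
      assume "k = 0"
      then have "t \<le> 1 / ?N" using 3(5) by simp
      then show False using False by simp
    qed
    then obtain k' where k': "k = Suc k'" by (cases k) auto
    let ?s = "(t - 1 / ?N) / (1 - 1 / ?N)"
    have e1: "Rr (Suc (Suc n)) qs t = Rr (Suc n) (\<lambda>i. qs (Suc i)) ?s"
      using False by (simp add: joinw_def)
    have dd: "(x / c) / (y / c) = x / y" if "c \<noteq> 0" for x y c :: real
      using that by (cases "y = 0") (simp_all add: field_simps)
    have a1: "1 - 1 / ?N = real (Suc n) / ?N" by (simp add: field_simps)
    have a2: "t - 1 / ?N = (?N * t - 1) / ?N" by (simp add: field_simps)
    have s_eq: "?s = (?N * t - 1) / real (Suc n)"
      unfolding a1 a2 by (rule dd) simp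
    have lo: "real k' / real (Suc n) \<le> ?s"
    proof -
      have "real (Suc k') / ?N \<le> t" using 3(4) k' by simp
      then have "real (Suc k') \<le> ?N * t" by (simp add: divide_simps mult.commute)
      then have "real k' \<le> ?N * t - 1" by simp
      then show ?thesis unfolding s_eq by (simp add: divide_right_mono)
    qed
    have hi: "?s \<le> real (Suc k') / real (Suc n)"
    proof -
      have "t \<le> real (Suc (Suc k')) / ?N" using 3(5) k' by simp
      then have "?N * t \<le> real (Suc (Suc k'))" by (simp add: divide_simps mult.commute)
      then have "?N * t - 1 \<le> real (Suc k')" by simp
      then show ?thesis unfolding s_eq by (simp add: divide_right_mono)
    qed
    have IH: "Rr (Suc n) (\<lambda>i. qs (Suc i)) ?s = qs (Suc k') (real (Suc n) * ?s - real k')"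
      using 3(1)[of k' ?s] 3(2) 3(3) k' lo hi by simp
    have "real (Suc n) * ?s = ?N * t - 1"
      unfolding s_eq by (simp del: of_nat_Suc)
    then have "real (Suc n) * ?s - real k' = ?N * t - real k"
      using k' by (simp add: algebra_simps)
    then show ?thesis using e1 IH k' by metis
  qed
qed

lemma jl: "t \<le> 1/2 \<Longrightarrow> (p +++ q) t = p (2 * t)"
  by (simp add: joinpaths_def)

lemma jr:
  assumes "pathfinish p = pathstart q" "1/2 \<le> t"
  shows "(p +++ q) t = q (2 * t - 1)"
proof (cases "t = 1/2")
  case True
  have "(p +++ q) t = p 1" unfolding True joinpaths_def by simp
  also have "\<dots> = q 0" using assms(1) by (simp add: pathstart_def pathfinish_def)
  also have "\<dots> = q (2 * t - 1)" unfolding True by simp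
  finally show ?thesis .
next
  case False
  then show ?thesis using assms(2) by (simp add: joinpaths_def)
qed

lemma Jf_cong: "(\<And>i. i < n \<Longrightarrow> a i = b i) \<Longrightarrow> Jf n a = Jf n b"
  unfolding Jf_def by (metis (mono_tags, lifting) atLeastLessThan_iff map_eq_conv set_upt)

context corr begin

definition Phi :: "(real \<Rightarrow> 'a) \<Rightarrow> real \<Rightarrow> 'b" where
  "Phi p = (SOME q. adm \<eta> K p q)"

lemma EXK:
  assumes "lpX p"
  shows "\<exists>N>0. \<forall>n\<ge>N. \<exists>ys qs. samp \<eta> K p n ys qs"
proof -
  have "\<eta> + e + \<eta> = K" unfolding K_def by simp
  then show ?thesis using EX[OF assms eta] by simp
qed

lemma Phi_samp:
  assumes "lpX p"
  shows "\<exists>n ys qs. samp \<eta> K p n ys qs \<and> homotopic_paths Y (Phi p) (Jf n qs)"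
proof -
  obtain N where N: "N > 0" "\<forall>n\<ge>N. \<exists>ys qs. samp \<eta> K p n ys qs" using EXK[OF assms] by blast
  then obtain ys qs where s: "samp \<eta> K p N ys qs" by blast
  have "homotopic_paths Y (Jf N qs) (Jf N qs)" using samp_clf(4,5)[OF s] by simp
  then have "adm \<eta> K p (Jf N qs)" using s unfolding adm_def by blast
  then have "adm \<eta> K p (Phi p)" unfolding Phi_def using someI[of "adm \<eta> K p"] by blast
  then show ?thesis unfolding adm_def by blast
qed

lemma Phi_loop:
  assumes "lpX p"
  shows "path (Phi p)" "path_image (Phi p) \<subseteq> Y" "pathstart (Phi p) = b" "pathfinish (Phi p) = b"
proof -
  obtain n ys qs where s: "samp \<eta> K p n ys qs" and h: "homotopic_paths Y (Phi p) (Jf n qs)"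
    using Phi_samp[OF assms] by blast
  show "path (Phi p)" "path_image (Phi p) \<subseteq> Y" "pathstart (Phi p) = b" "pathfinish (Phi p) = b"
    using homotopic_paths_imp_path[OF h] homotopic_paths_imp_subset[OF h]
      homotopic_paths_imp_pathstart[OF h] homotopic_paths_imp_pathfinish[OF h] samp_clf(2,3)[OF s] by auto
qed

lemma eta_K: "\<eta> \<le> K" unfolding K_def using e0 eta by simp

lemma Phi_any:
  assumes "lpX p" "samp \<sigma> \<kappa> p n ys qs" "\<sigma> \<le> K" "\<kappa> \<le> K"
  shows "homotopic_paths Y (Phi p) (Jf n qs)"
proof -
  obtain n' ys' qs' where s: "samp \<eta> K p n' ys' qs'" and h: "homotopic_paths Y (Phi p) (Jf n' qs')"
    using Phi_samp[OF assms(1)] by blast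
  have "homotopic_paths X p p" using assms(1) by (simp add: lpX_def)
  then have "homotopic_paths Y (Jf n' qs') (Jf n qs)"
    using W[OF assms(1) assms(1) _ s assms(2) eta_K order_refl assms(3,4)] by simp
  then show ?thesis using h homotopic_paths_trans by blast
qed

lemma Phi_cong:
  assumes "lpX p" "lpX p'" "homotopic_paths X p p'"
  shows "homotopic_paths Y (Phi p) (Phi p')"
proof -
  obtain n ys qs where s: "samp \<eta> K p n ys qs" and h: "homotopic_paths Y (Phi p) (Jf n qs)"
    using Phi_samp[OF assms(1)] by blast
  obtain n' ys' qs' where s': "samp \<eta> K p' n' ys' qs'" and h': "homotopic_paths Y (Phi p') (Jf n' qs')"
    using Phi_samp[OF assms(2)] by blast
  have "homotopic_paths Y (Jf n qs) (Jf n' qs')"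
    by (rule W[OF assms s s' eta_K order_refl eta_K order_refl])
  then show ?thesis using h h' by (meson homotopic_paths_sym homotopic_paths_trans)
qed

lemma lpX_join:
  assumes "lpX p" "lpX p'"
  shows "lpX (p +++ p')"
  using assms path_image_join_subset[of p p'] unfolding lpX_def by auto

lemma samp_join:
  assumes p: "lpX p" and p': "lpX p'" and s: "samp \<sigma> \<kappa> p n ys qs" and s': "samp \<sigma> \<kappa> p' n ys' qs'"
  shows "samp \<sigma> \<kappa> (p +++ p') (2 * n) (\<lambda>i. if i \<le> n then ys i else ys' (i - n))
           (\<lambda>i. if i < n then qs i else qs' (i - n))"
proof -
  let ?P = "p +++ p'"
  let ?ys = "\<lambda>i. if i \<le> n then ys i else ys' (i - n)"
  let ?qs = "\<lambda>i. if i < n then qs i else qs' (i - n)"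
  have n: "0 < n" using samp_D(1)[OF s] .
  have fin: "pathfinish p = pathstart p'" using p p' by (simp add: lpX_def)
  have Pv: "?P (real i / real (2 * n)) = (if i \<le> n then p (real i / real n) else p' (real (i - n) / real n))" for i
  proof (cases "i \<le> n")
    case True
    have "real i / real (2 * n) \<le> 1/2" using True n by (simp add: divide_simps)
    then show ?thesis using True jl[of "real i / real (2 * n)" p p'] by simp
  next
    case False
    have "1/2 \<le> real i / real (2 * n)" using False n by (simp add: divide_simps)
    moreover have "2 * (real i / real (2 * n)) - 1 = real (i - n) / real n"
      using False n by (simp add: divide_simps of_nat_diff)
    ultimately show ?thesis using False jr[OF fin, of "real i / real (2 * n)"] by simp
  qed
  have A: "?ys i \<in> Y \<and> C (?P (real i / real (2 * n))) (?ys i)" if "i \<le> 2 * n" for i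
  proof (cases "i \<le> n")
    case True
    then show ?thesis using samp_D(2,3)[OF s True] Pv[of i] by simp
  next
    case False
    then have "i - n \<le> n" using that by simp
    then show ?thesis using samp_D(2,3)[OF s' \<open>i - n \<le> n\<close>] Pv[of i] False by simp
  qed
  have B0: "?ys 0 = b" "?ys (2 * n) = b" using samp_D(4)[OF s] samp_D(5)[OF s'] n by auto
  have Bi: "?P ` {real i / real (2 * n)..real (Suc i) / real (2 * n)} \<subseteq> ball (?P (real i / real (2 * n))) \<sigma>"
    if "i < 2 * n" for i
  proof
    fix w assume "w \<in> ?P ` {real i / real (2 * n)..real (Suc i) / real (2 * n)}"
    then obtain t where t: "real i / real (2 * n) \<le> t" "t \<le> real (Suc i) / real (2 * n)" "w = ?P t" by auto
    show "w \<in> ball (?P (real i / real (2 * n))) \<sigma>"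
    proof (cases "i < n")
      case True
      have "real (Suc i) / real (2 * n) \<le> 1/2" using True n by (simp add: divide_simps)
      then have "t \<le> 1/2" using t(2) by linarith
      then have Pt: "?P t = p (2 * t)" by (rule jl)
      have "2 * t \<in> {real i / real n..real (Suc i) / real n}" using t(1,2) n by (auto simp: divide_simps)
      then have "p (2 * t) \<in> ball (p (real i / real n)) \<sigma>" using samp_D(6)[OF s True] by blast
      then show ?thesis using Pt t(3) Pv[of i] True by simp
    next
      case False
      have "1/2 \<le> real i / real (2 * n)" using False n by (simp add: divide_simps)
      then have "1/2 \<le> t" using t(1) by linarith
      then have Pt: "?P t = p' (2 * t - 1)" by (rule jr[OF fin])
      have i': "i - n < n" using that False by simp
      have "2 * t - 1 \<in> {real (i - n) / real n..real (Suc (i - n)) / real n}"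
        using t(1,2) n False by (auto simp: divide_simps of_nat_diff algebra_simps)
      then have "p' (2 * t - 1) \<in> ball (p' (real (i - n) / real n)) \<sigma>" using samp_D(6)[OF s' i'] by blast
      have Pv2: "?P (real i / real (2 * n)) = p' (real (i - n) / real n)"
      proof (cases "i = n")
        case True
        then show ?thesis using Pv[of i] fin n by (simp add: pathstart_def pathfinish_def)
      next
        case False
        then show ?thesis using Pv[of i] \<open>\<not> i < n\<close> by simp
      qed
      show ?thesis using \<open>p' (2 * t - 1) \<in> ball (p' (real (i - n) / real n)) \<sigma>\<close> Pt t(3) Pv2 by simp
    qed
  qed
  have Ci: "path (?qs i) \<and> path_image (?qs i) \<subseteq> Y \<and> path_image (?qs i) \<subseteq> ball (?ys i) \<kappa> \<and>
            pathstart (?qs i) = ?ys i \<and> pathfinish (?qs i) = ?ys (Suc i)" if "i < 2 * n" for i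
  proof (cases "i < n")
    case True
    then show ?thesis using samp_D(7-11)[OF s True] by simp
  next
    case False
    have i': "i - n < n" using that False by simp
    have ysi: "?ys i = ys' (i - n)"
    proof (cases "i = n")
      case True
      then show ?thesis using samp_D(5)[OF s] samp_D(4)[OF s'] by simp
    qed (use False in simp)
    have "Suc i - n = Suc (i - n)" using False by simp
    then show ?thesis using samp_D(7-11)[OF s' i'] False ysi by simp
  qed
  show ?thesis unfolding samp_def using n A B0 Bi Ci by auto
qed

lemma Phi_join:
  assumes p: "lpX p" and p': "lpX p'"
  shows "homotopic_paths Y (Phi (p +++ p')) (Phi p +++ Phi p')"
proof -
  obtain N1 where N1: "\<forall>n\<ge>N1. \<exists>ys qs. samp \<eta> K p n ys qs" using EXK[OF p] by blast
  obtain N2 where N2: "\<forall>n\<ge>N2. \<exists>ys qs. samp \<eta> K p' n ys qs" using EXK[OF p'] by blast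
  define n where "n = max N1 N2"
  have "N1 \<le> n" "N2 \<le> n" unfolding n_def by auto
  then obtain ys qs ys' qs' where s: "samp \<eta> K p n ys qs" and s': "samp \<eta> K p' n ys' qs'" using N1 N2 by blast
  have n: "0 < n" using samp_D(1)[OF s] .
  let ?ys = "\<lambda>i. if i \<le> n then ys i else ys' (i - n)"
  let ?qs = "\<lambda>i. if i < n then qs i else qs' (i - n)"
  have sj: "samp \<eta> K (p +++ p') (2 * n) ?ys ?qs" by (rule samp_join[OF p p' s s'])
  have h1: "homotopic_paths Y (Phi (p +++ p')) (Jf (2 * n) ?qs)"
    by (rule Phi_any[OF lpX_join[OF p p'] sj eta_K order_refl])
  have c2: "clf Y (n + n) ?qs" using samp_clf(1)[OF sj] by (simp add: mult_2)
  have h2: "homotopic_paths Y (Jf (n + n) ?qs) (Jf n ?qs +++ Jf n (\<lambda>i. ?qs (n + i)))"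
    by (rule Jf_add[OF c2 n n])
  have e1: "Jf n ?qs = Jf n qs" by (rule Jf_cong) simp
  have e2: "Jf n (\<lambda>i. ?qs (n + i)) = Jf n qs'" by (rule Jf_cong) simp
  have h3: "homotopic_paths Y (Phi p) (Jf n qs)" by (rule Phi_any[OF p s eta_K order_refl])
  have h4: "homotopic_paths Y (Phi p') (Jf n qs')" by (rule Phi_any[OF p' s' eta_K order_refl])
  have h5: "homotopic_paths Y (Jf n qs +++ Jf n qs') (Phi p +++ Phi p')"
    by (rule homotopic_paths_join) (use h3 h4 samp_clf(2,3)[OF s] samp_clf(2,3)[OF s'] homotopic_paths_sym in auto)
  have h2': "homotopic_paths Y (Jf (2 * n) ?qs) (Jf n qs +++ Jf n qs')" using h2 e1 e2 by (simp add: mult_2)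
  show ?thesis using h1 h2' h5 homotopic_paths_trans by blast
qed

end

locale corr2 = fwd: corr X Y C e \<eta> \<rho> a b + bwd: corr Y X "\<lambda>y x. C x y" e \<eta> \<rho>' b a
  for X :: "'a::metric_space set" and Y :: "'b::metric_space set" and C e \<eta> \<rho> \<rho>' a b
begin

lemma Rr_facts:
  assumes s: "fwd.samp \<sigma> \<kappa> p n ys qs"
  shows "\<And>i. i \<le> n \<Longrightarrow> Rr n qs (real i / real n) = ys i"
    "\<And>i. i < n \<Longrightarrow> Rr n qs ` {real i / real n..real (Suc i) / real n} \<subseteq> path_image (qs i)"
proof -
  have n: "0 < n" using fwd.samp_D(1)[OF s] .
  have ends: "qs k 1 = qs (Suc k) 0" if "Suc k < n" for k
    using fwd.samp_D(10,11)[OF s] that by (simp add: pathstart_def pathfinish_def)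
  show "Rr n qs (real i / real n) = ys i" if "i \<le> n" for i
  proof (cases "i < n")
    case True
    have "Rr n qs (real i / real n) = qs i (real n * (real i / real n) - real i)"
      by (rule Rr_piece[where n=n and qs=qs, OF ends True]) (auto simp: divide_simps)
    also have "\<dots> = qs i 0" using n by simp
    also have "\<dots> = ys i" using fwd.samp_D(10)[OF s True] by (simp add: pathstart_def)
    finally show ?thesis .
  next
    case False
    then have i: "i = n" using that by simp
    have k: "n - 1 < n" using n by simp
    have "Rr n qs (real i / real n) = qs (n - 1) (real n * (real i / real n) - real (n - 1))"
      by (rule Rr_piece[where n=n and qs=qs, OF ends k]) (use n i in \<open>auto simp: divide_simps of_nat_diff\<close>)
    also have "\<dots> = qs (n - 1) 1" using n i by (simp add: of_nat_diff)
    also have "\<dots> = ys n" using fwd.samp_D(11)[OF s k] n by (simp add: pathfinish_def)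
    finally show ?thesis using i by simp
  qed
  show "Rr n qs ` {real i / real n..real (Suc i) / real n} \<subseteq> path_image (qs i)" if "i < n" for i
  proof
    fix w assume "w \<in> Rr n qs ` {real i / real n..real (Suc i) / real n}"
    then obtain t where t: "real i / real n \<le> t" "t \<le> real (Suc i) / real n" "w = Rr n qs t" by auto
    have "Rr n qs t = qs i (real n * t - real i)" by (rule Rr_piece[where n=n and qs=qs, OF ends that t(1,2)])
    moreover have "real n * t - real i \<in> {0..1}" using t(1,2) n by (auto simp: divide_simps mult.commute)
    ultimately show "w \<in> path_image (qs i)" using t(3) unfolding path_image_def by auto
  qed
qed

lemma PP:
  assumes p: "fwd.lpX p" and s: "fwd.samp \<sigma> \<kappa> p n ys qs"
  shows "bwd.samp \<kappa> \<sigma> (Rr n qs) n (\<lambda>i. p (real i / real n)) (pieces n p)"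
proof -
  have n: "0 < n" using fwd.samp_D(1)[OF s] .
  have pp: "path p" "path_image p \<subseteq> X" "p 0 = a" "p 1 = a"
    using p unfolding fwd.lpX_def by (auto simp: pathstart_def pathfinish_def)
  have A: "p (real i / real n) \<in> X \<and> C (p (real i / real n)) (Rr n qs (real i / real n))" if "i \<le> n" for i
    using fwd.lpX_in[OF p frac01[OF that n]] fwd.samp_D(3)[OF s that] Rr_facts(1)[OF s that] by simp
  have B: "Rr n qs ` {real i / real n..real (Suc i) / real n} \<subseteq> ball (Rr n qs (real i / real n)) \<kappa>"
    if "i < n" for i
    using Rr_facts(2)[OF s that] fwd.samp_D(9)[OF s that] Rr_facts(1)[OF s, of i] that by auto
  have Cc: "path (pieces n p i) \<and> path_image (pieces n p i) \<subseteq> X \<and>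
     path_image (pieces n p i) \<subseteq> ball (p (real i / real n)) \<sigma> \<and>
     pathstart (pieces n p i) = p (real i / real n) \<and> pathfinish (pieces n p i) = p (real (Suc i) / real n)"
    if "i < n" for i
  proof -
    have cl: "clf X n (pieces n p)" by (rule clf_pieces[OF pp(1,2) n])
    have le: "real i / real n \<le> real (Suc i) / real n" by (simp add: divide_simps)
    have "path_image (pieces n p i) = p ` {real i / real n..real (Suc i) / real n}"
      unfolding pieces_def by (rule path_image_sp[OF le])
    then show ?thesis using cl that fwd.samp_D(6)[OF s that] by (auto simp: clf_def pieces_def)
  qed
  show ?thesis unfolding bwd.samp_def using n A B Cc pp(3,4) by simp
qed

lemma GF:
  assumes p: "fwd.lpX p"
  shows "homotopic_paths X (bwd.Phi (fwd.Phi p)) p"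
proof -
  obtain n ys qs where s: "fwd.samp \<eta> fwd.K p n ys qs" and h: "homotopic_paths Y (fwd.Phi p) (Jf n qs)"
    using fwd.Phi_samp[OF p] by blast
  have hR: "homotopic_paths Y (Jf n qs) (Rr n qs)" by (rule Rr_hom[OF fwd.samp_clf(1)[OF s]])
  have hP: "homotopic_paths Y (fwd.Phi p) (Rr n qs)" using h hR homotopic_paths_trans by blast
  have l1: "bwd.lpX (fwd.Phi p)" using fwd.Phi_loop[OF p] unfolding bwd.lpX_def by simp
  have l2: "bwd.lpX (Rr n qs)"
    using l1 homotopic_paths_imp_path[OF hP] homotopic_paths_imp_subset[OF hP]
      homotopic_paths_imp_pathstart[OF hP] homotopic_paths_imp_pathfinish[OF hP]
    unfolding bwd.lpX_def by simp
  have KK: "bwd.K = fwd.K" unfolding bwd.K_def fwd.K_def ..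
  have sR: "bwd.samp bwd.K \<eta> (Rr n qs) n (\<lambda>i. p (real i / real n)) (pieces n p)"
    using PP[OF p s] KK by simp
  obtain n2 ys2 qs2 where s2: "bwd.samp \<eta> bwd.K (fwd.Phi p) n2 ys2 qs2"
    and h2: "homotopic_paths X (bwd.Phi (fwd.Phi p)) (Jf n2 qs2)"
    using bwd.Phi_samp[OF l1] by blast
  have W2: "homotopic_paths X (Jf n2 qs2) (Jf n (pieces n p))"
    by (rule bwd.W[OF l1 l2 hP s2 sR bwd.eta_K order_refl order_refl bwd.eta_K])
  have n: "0 < n" using fwd.samp_D(1)[OF s] .
  have pp: "path p" "path_image p \<subseteq> X" using p unfolding fwd.lpX_def by auto
  have "homotopic_paths X p (Jf n (pieces n p))" by (rule Jf_pieces[OF pp n])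
  then show ?thesis using h2 W2 by (meson homotopic_paths_sym homotopic_paths_trans)
qed

end

definition ok :: "'a::topological_space set \<Rightarrow> (real \<Rightarrow> 'a) \<Rightarrow> 'a \<Rightarrow> 'a \<Rightarrow> bool" where
  "ok S p x y \<longleftrightarrow> path p \<and> path_image p \<subseteq> S \<and> pathstart p = x \<and> pathfinish p = y"

lemma ok_join: "ok S p x y \<Longrightarrow> ok S q y z \<Longrightarrow> ok S (p +++ q) x z"
  unfolding ok_def using path_image_join_subset[of p q] by auto

lemma ok_rev: "ok S p x y \<Longrightarrow> ok S (reversepath p) y x"
  unfolding ok_def by auto

lemma ok_cp: "x \<in> S \<Longrightarrow> ok S (cp x) x x"
  unfolding ok_def by auto

lemma ok_hp: "homotopic_paths S p q \<Longrightarrow> ok S p x y \<Longrightarrow> ok S q x y"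
  unfolding ok_def using homotopic_paths_imp_path homotopic_paths_imp_subset
    homotopic_paths_imp_pathstart homotopic_paths_imp_pathfinish by metis

lemma ok_refl: "ok S p x y \<Longrightarrow> homotopic_paths S p p"
  unfolding ok_def by simp

lemma hp_assoc: "ok S p x y \<Longrightarrow> ok S q y z \<Longrightarrow> ok S r z w \<Longrightarrow>
   homotopic_paths S (p +++ (q +++ r)) ((p +++ q) +++ r)"
  unfolding ok_def by (intro homotopic_paths_assoc) auto

lemma hp_assoc': "ok S p x y \<Longrightarrow> ok S q y z \<Longrightarrow> ok S r z w \<Longrightarrow>
   homotopic_paths S ((p +++ q) +++ r) (p +++ (q +++ r))"
  using hp_assoc homotopic_paths_sym by blast

lemma hp_j: "homotopic_paths S p p' \<Longrightarrow> homotopic_paths S q q' \<Longrightarrow> ok S p x y \<Longrightarrow> ok S q y z \<Longrightarrow>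
   homotopic_paths S (p +++ q) (p' +++ q')"
  unfolding ok_def by (intro homotopic_paths_join) auto

lemma hp_rinv': "ok S p x y \<Longrightarrow> homotopic_paths S (p +++ reversepath p) (cp x)"
  unfolding ok_def using hp_rinv by metis

lemma hp_lid': "ok S p x y \<Longrightarrow> homotopic_paths S (cp x +++ p) p"
  unfolding ok_def using hp_lid by metis

lemma hp_rid': "ok S p x y \<Longrightarrow> homotopic_paths S (p +++ cp y) p"
  unfolding ok_def using hp_rid by metis

definition cls :: "'a::topological_space set \<Rightarrow> (real \<Rightarrow> 'a) \<Rightarrow> (real \<Rightarrow> 'a) set" where
  "cls S p = Collect (homotopic_paths S p)"

lemma cls_eq:
  assumes "ok S p x x" "ok S q x x"
  shows "cls S p = cls S q \<longleftrightarrow> homotopic_paths S p q"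
proof
  assume eq: "cls S p = cls S q"
  have "q \<in> cls S q" using ok_refl[OF assms(2)] by (simp add: cls_def)
  then have "q \<in> cls S p" using eq by simp
  then show "homotopic_paths S p q" by (simp add: cls_def)
next
  assume h: "homotopic_paths S p q"
  show "cls S p = cls S q"
    unfolding cls_def using h homotopic_paths_sym homotopic_paths_trans by blast
qed

lemma fg_carrier: "carrier (fundamental_group S x) = {cls S p | p. ok S p x x}"
  by (auto simp: fundamental_group_def cls_def ok_def)

lemma fg_mult:
  assumes "ok S p x x" "ok S q x x"
  shows "mult (fundamental_group S x) (cls S p) (cls S q) = cls S (p +++ q)"
proof -
  have "{r. \<exists>p'\<in>cls S p. \<exists>q'\<in>cls S q. homotopic_paths S (p' +++ q') r} = cls S (p +++ q)"
  proof (intro equalityI subsetI)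
    fix r assume "r \<in> {r. \<exists>p'\<in>cls S p. \<exists>q'\<in>cls S q. homotopic_paths S (p' +++ q') r}"
    then obtain p' q' where pq: "homotopic_paths S p p'" "homotopic_paths S q q'" "homotopic_paths S (p' +++ q') r"
      by (auto simp: cls_def)
    have "homotopic_paths S (p +++ q) (p' +++ q')" by (rule hp_j[OF pq(1,2) assms])
    then show "r \<in> cls S (p +++ q)" using pq(3) homotopic_paths_trans by (auto simp: cls_def)
  next
    fix r assume "r \<in> cls S (p +++ q)"
    then have "homotopic_paths S (p +++ q) r" by (simp add: cls_def)
    moreover have "p \<in> cls S p" "q \<in> cls S q" using ok_refl[OF assms(1)] ok_refl[OF assms(2)] by (simp_all add: cls_def)
    ultimately show "r \<in> {r. \<exists>p'\<in>cls S p. \<exists>q'\<in>cls S q. homotopic_paths S (p' +++ q') r}"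
      by blast
  qed
  then show ?thesis by (simp add: fundamental_group_def)
qed

lemma iso_from_maps:
  fixes X :: "'a::topological_space set" and Y :: "'b::topological_space set"
  assumes F1: "\<And>p. ok X p a a \<Longrightarrow> ok Y (F p) b b"
    and F2: "\<And>p p'. ok X p a a \<Longrightarrow> ok X p' a a \<Longrightarrow> homotopic_paths X p p' \<Longrightarrow> homotopic_paths Y (F p) (F p')"
    and F3: "\<And>p p'. ok X p a a \<Longrightarrow> ok X p' a a \<Longrightarrow> homotopic_paths Y (F (p +++ p')) (F p +++ F p')"
    and G1: "\<And>q. ok Y q b b \<Longrightarrow> ok X (G q) a a"
    and G2: "\<And>q q'. ok Y q b b \<Longrightarrow> ok Y q' b b \<Longrightarrow> homotopic_paths Y q q' \<Longrightarrow> homotopic_paths X (G q) (G q')"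
    and GF: "\<And>p. ok X p a a \<Longrightarrow> homotopic_paths X (G (F p)) p"
    and FG: "\<And>q. ok Y q b b \<Longrightarrow> homotopic_paths Y (F (G q)) q"
  shows "fundamental_group X a \<cong> fundamental_group Y b"
proof -
  define h where "h c = cls Y (F (SOME p. ok X p a a \<and> c = cls X p))" for c
  have hc: "h (cls X p) = cls Y (F p)" if p: "ok X p a a" for p
  proof -
    have ex: "\<exists>p'. ok X p' a a \<and> cls X p = cls X p'" using p by blast
    define p' where "p' = (SOME p'. ok X p' a a \<and> cls X p = cls X p')"
    have p': "ok X p' a a" "cls X p = cls X p'" using someI_ex[OF ex] unfolding p'_def by auto
    then have "homotopic_paths X p p'" using cls_eq[OF p p'(1)] by simp
    then have "homotopic_paths Y (F p) (F p')" using F2 p p'(1) by blast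
    then have "cls Y (F p') = cls Y (F p)" using cls_eq[OF F1[OF p'(1)] F1[OF p]] homotopic_paths_sym by blast
    then show ?thesis unfolding h_def p'_def[symmetric] by simp
  qed
  have "h \<in> hom (fundamental_group X a) (fundamental_group Y b)"
  proof (unfold hom_def, intro CollectI conjI ballI)
    show "h \<in> carrier (fundamental_group X a) \<rightarrow> carrier (fundamental_group Y b)"
      using hc F1 unfolding fg_carrier by auto
  next
    fix x y assume "x \<in> carrier (fundamental_group X a)" "y \<in> carrier (fundamental_group X a)"
    then obtain p q where pq: "x = cls X p" "ok X p a a" "y = cls X q" "ok X q a a" unfolding fg_carrier by auto
    have "h (x \<otimes>\<^bsub>fundamental_group X a\<^esub> y) = h (cls X (p +++ q))"
      using fg_mult[OF pq(2,4)] pq by simp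
    also have "\<dots> = cls Y (F (p +++ q))" using hc ok_join[OF pq(2,4)] by simp
    also have "\<dots> = cls Y (F p +++ F q)"
      using cls_eq[OF F1[OF ok_join[OF pq(2,4)]] ok_join[OF F1[OF pq(2)] F1[OF pq(4)]]] F3[OF pq(2,4)] by simp
    also have "\<dots> = h x \<otimes>\<^bsub>fundamental_group Y b\<^esub> h y"
      using fg_mult[OF F1[OF pq(2)] F1[OF pq(4)]] hc pq by simp
    finally show "h (x \<otimes>\<^bsub>fundamental_group X a\<^esub> y) = h x \<otimes>\<^bsub>fundamental_group Y b\<^esub> h y" .
  qed
  moreover have "bij_betw h (carrier (fundamental_group X a)) (carrier (fundamental_group Y b))"
  proof (rule bij_betw_imageI)
    show "inj_on h (carrier (fundamental_group X a))"
    proof (rule inj_onI)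
      fix x y assume "x \<in> carrier (fundamental_group X a)" "y \<in> carrier (fundamental_group X a)" "h x = h y"
      then obtain p q where pq: "x = cls X p" "ok X p a a" "y = cls X q" "ok X q a a" "h x = h y"
        unfolding fg_carrier by auto
      then have "cls Y (F p) = cls Y (F q)" using hc by simp
      then have "homotopic_paths Y (F p) (F q)" using cls_eq[OF F1[OF pq(2)] F1[OF pq(4)]] by simp
      then have "homotopic_paths X (G (F p)) (G (F q))" using G2 F1 pq by blast
      then have "homotopic_paths X p q" using GF[OF pq(2)] GF[OF pq(4)]
        by (meson homotopic_paths_sym homotopic_paths_trans)
      then show "x = y" using cls_eq[OF pq(2,4)] pq by simp
    qed
    show "h ` carrier (fundamental_group X a) = carrier (fundamental_group Y b)"
    proof (intro equalityI subsetI)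
      fix y assume "y \<in> h ` carrier (fundamental_group X a)"
      then show "y \<in> carrier (fundamental_group Y b)" using hc F1 unfolding fg_carrier by auto
    next
      fix y assume "y \<in> carrier (fundamental_group Y b)"
      then obtain q where q: "y = cls Y q" "ok Y q b b" unfolding fg_carrier by auto
      have "h (cls X (G q)) = cls Y (F (G q))" using hc G1[OF q(2)] by simp
      also have "\<dots> = cls Y q" using cls_eq[OF F1[OF G1[OF q(2)]] q(2)] FG[OF q(2)] by simp
      finally have "h (cls X (G q)) = y" using q by simp
      moreover have "cls X (G q) \<in> carrier (fundamental_group X a)" using G1[OF q(2)] unfolding fg_carrier by auto
      ultimately show "y \<in> h ` carrier (fundamental_group X a)" by blast
    qed
  qed
  ultimately show ?thesis unfolding is_iso_def iso_def by blast
qed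

lemma conj_cong:
  assumes "ok S r1 u x" "ok S r2 x u" "ok S p x x" "ok S p' x x" "homotopic_paths S p p'"
  shows "homotopic_paths S (r1 +++ (p +++ r2)) (r1 +++ (p' +++ r2))"
  by (rule hp_j[OF ok_refl[OF assms(1)] hp_j[OF assms(5) ok_refl[OF assms(2)] assms(3) assms(2)] assms(1)
          ok_join[OF assms(3) assms(2)]])

lemma conj_hom:
  assumes r: "ok S r x y" and r': "ok S r' y x" and rr: "homotopic_paths S (r +++ r') (cp x)"
    and p: "ok S p x x" and p': "ok S p' x x"
  shows "homotopic_paths S (r' +++ ((p +++ p') +++ r)) ((r' +++ (p +++ r)) +++ (r' +++ (p' +++ r)))"
proof -
  have xS: "x \<in> S" using p unfolding ok_def by (metis pathstart_in_path_image subsetD)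
  have o1: "ok S (p' +++ r) x y" by (rule ok_join[OF p' r])
  have o2: "ok S (r' +++ (p' +++ r)) y y" by (rule ok_join[OF r' o1])
  have s1: "homotopic_paths S ((p +++ p') +++ r) (p +++ (p' +++ r))" by (rule hp_assoc'[OF p p' r])
  have s2: "homotopic_paths S (p' +++ r) (cp x +++ (p' +++ r))"
    using hp_lid'[OF o1] homotopic_paths_sym by blast
  have s3: "homotopic_paths S (cp x +++ (p' +++ r)) ((r +++ r') +++ (p' +++ r))"
    by (rule hp_j[OF homotopic_paths_sym[OF rr] ok_refl[OF o1] ok_cp[OF xS] o1])
  have s4: "homotopic_paths S ((r +++ r') +++ (p' +++ r)) (r +++ (r' +++ (p' +++ r)))"
    by (rule hp_assoc'[OF r r' o1])
  have s5: "homotopic_paths S (p +++ (p' +++ r)) (p +++ (r +++ (r' +++ (p' +++ r))))"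
    by (rule hp_j[OF ok_refl[OF p] homotopic_paths_trans[OF s2 homotopic_paths_trans[OF s3 s4]] p o1])
  have s6: "homotopic_paths S (p +++ (r +++ (r' +++ (p' +++ r)))) ((p +++ r) +++ (r' +++ (p' +++ r)))"
    by (rule hp_assoc[OF p r o2])
  have inner: "homotopic_paths S ((p +++ p') +++ r) ((p +++ r) +++ (r' +++ (p' +++ r)))"
    using s1 s5 s6 homotopic_paths_trans by blast
  have t1: "homotopic_paths S (r' +++ ((p +++ p') +++ r)) (r' +++ ((p +++ r) +++ (r' +++ (p' +++ r))))"
    by (rule hp_j[OF ok_refl[OF r'] inner r' ok_join[OF ok_join[OF p p'] r]])
  have t2: "homotopic_paths S (r' +++ ((p +++ r) +++ (r' +++ (p' +++ r)))) ((r' +++ (p +++ r)) +++ (r' +++ (p' +++ r)))"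
    by (rule hp_assoc[OF r' ok_join[OF p r] o2])
  show ?thesis using t1 t2 homotopic_paths_trans by blast
qed

lemma conj_inv:
  assumes r: "ok S r x y" and r': "ok S r' y x" and rr2: "homotopic_paths S (r +++ r') (cp x)"
    and p: "ok S p x x"
  shows "homotopic_paths S (r +++ ((r' +++ (p +++ r)) +++ r')) p"
proof -
  have o1: "ok S (p +++ r) x y" by (rule ok_join[OF p r])
  have o2: "ok S ((p +++ r) +++ r') x x" by (rule ok_join[OF o1 r'])
  have s1: "homotopic_paths S ((r' +++ (p +++ r)) +++ r') (r' +++ ((p +++ r) +++ r'))"
    by (rule hp_assoc'[OF r' o1 r'])
  have s2: "homotopic_paths S (r +++ ((r' +++ (p +++ r)) +++ r')) (r +++ (r' +++ ((p +++ r) +++ r')))"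
    by (rule hp_j[OF ok_refl[OF r] s1 r ok_join[OF ok_join[OF r' o1] r']])
  have s3: "homotopic_paths S (r +++ (r' +++ ((p +++ r) +++ r'))) ((r +++ r') +++ ((p +++ r) +++ r'))"
    by (rule hp_assoc[OF r r' o2])
  have s4: "homotopic_paths S ((r +++ r') +++ ((p +++ r) +++ r')) (cp x +++ ((p +++ r) +++ r'))"
    by (rule hp_j[OF rr2 ok_refl[OF o2] ok_join[OF r r'] o2])
  have s5: "homotopic_paths S (cp x +++ ((p +++ r) +++ r')) ((p +++ r) +++ r')"
    by (rule hp_lid'[OF o2])
  have s6: "homotopic_paths S ((p +++ r) +++ r') (p +++ (r +++ r'))" by (rule hp_assoc'[OF p r r'])
  have s7: "homotopic_paths S (p +++ (r +++ r')) (p +++ cp x)"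
    by (rule hp_j[OF ok_refl[OF p] rr2 p ok_join[OF r r']])
  have s8: "homotopic_paths S (p +++ cp x) p" by (rule hp_rid'[OF p])
  show ?thesis using s2 s3 s4 s5 s6 s7 s8 homotopic_paths_trans by blast
qed

lemma basepoint_iso:
  assumes c: "ok S c a a'"
  shows "fundamental_group S a \<cong> fundamental_group S a'"
proof -
  have rc: "ok S (reversepath c) a' a" by (rule ok_rev[OF c])
  have r1: "homotopic_paths S (c +++ reversepath c) (cp a)" by (rule hp_rinv'[OF c])
  have r2: "homotopic_paths S (reversepath c +++ c) (cp a')" using hp_rinv'[OF rc] by simp
  show ?thesis
  proof (rule iso_from_maps[where F = "\<lambda>p. reversepath c +++ (p +++ c)" and G = "\<lambda>q. c +++ (q +++ reversepath c)"])
    show "ok S (reversepath c +++ (p +++ c)) a' a'" if "ok S p a a" for p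
      by (rule ok_join[OF rc ok_join[OF that c]])
    show "homotopic_paths S (reversepath c +++ (p +++ c)) (reversepath c +++ (p' +++ c))"
      if "ok S p a a" "ok S p' a a" "homotopic_paths S p p'" for p p'
      by (rule conj_cong[OF rc c that])
    show "homotopic_paths S (reversepath c +++ ((p +++ p') +++ c))
            ((reversepath c +++ (p +++ c)) +++ (reversepath c +++ (p' +++ c)))"
      if "ok S p a a" "ok S p' a a" for p p'
      by (rule conj_hom[OF c rc r1 that])
    show "ok S (c +++ (q +++ reversepath c)) a a" if "ok S q a' a'" for q
      by (rule ok_join[OF c ok_join[OF that rc]])
    show "homotopic_paths S (c +++ (q +++ reversepath c)) (c +++ (q' +++ reversepath c))"
      if "ok S q a' a'" "ok S q' a' a'" "homotopic_paths S q q'" for q q'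
      by (rule conj_cong[OF c rc that])
    show "homotopic_paths S (c +++ ((reversepath c +++ (p +++ c)) +++ reversepath c)) p"
      if "ok S p a a" for p
      by (rule conj_inv[OF c rc r1 that])
    show "homotopic_paths S (reversepath c +++ ((c +++ (q +++ reversepath c)) +++ c)) q"
      if "ok S q a' a'" for q
      by (rule conj_inv[OF rc c r2 that])
  qed
qed

lemma curve_length_ge:
  assumes "t \<in> {0..1}"
  shows "ereal (dist (g 0) (g t)) \<le> curve_length g"
proof -
  define tt where "tt i = (if i = 0 then 0 else if i = (1::nat) then t else 1)" for i
  have mem: "(2::nat, tt) \<in> {(n::nat, t::nat \<Rightarrow> real). t 0 = 0 \<and> t n = 1 \<and> (\<forall>i<n. t i \<le> t (Suc i))}"
  proof -
    have "\<forall>i<2. tt i \<le> tt (Suc i)"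
    proof (intro allI impI)
      fix i :: nat assume "i < 2"
      then have "i = 0 \<or> i = 1" by auto
      then show "tt i \<le> tt (Suc i)" using assms by (auto simp: tt_def)
    qed
    then show ?thesis by (simp add: tt_def)
  qed
  have "(\<Sum>i<2. dist (g (tt i)) (g (tt (Suc i)))) = dist (g 0) (g t) + dist (g t) (g 1)"
    by (simp add: tt_def numeral_2_eq_2)
  then have "ereal (dist (g 0) (g t)) \<le> ereal (\<Sum>i<fst (2::nat, tt). dist (g (snd (2::nat, tt) i)) (g (snd (2::nat, tt) (Suc i))))"
    by simp
  also have "\<dots> \<le> curve_length g"
    unfolding curve_length_def by (rule SUP_upper[OF mem])
  finally show ?thesis .
qed

lemma length_space_short:
  assumes "length_space S" "u \<in> S" "v \<in> S" "0 < \<eta>"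
  shows "\<exists>q. path q \<and> path_image q \<subseteq> S \<and> path_image q \<subseteq> ball u (dist u v + \<eta>) \<and> pathstart q = u \<and> pathfinish q = v"
proof -
  have eq: "ereal (dist u v) = (INF g \<in> {g. path g \<and> path_image g \<subseteq> S \<and> pathstart g = u \<and> pathfinish g = v}. curve_length g)"
    using assms(1-3) unfolding length_space_def by blast
  have "ereal (dist u v) < ereal (dist u v + \<eta>)" using assms(4) by simp
  then have "(INF g \<in> {g. path g \<and> path_image g \<subseteq> S \<and> pathstart g = u \<and> pathfinish g = v}. curve_length g) < ereal (dist u v + \<eta>)"
    unfolding eq .
  then obtain g where g: "path g" "path_image g \<subseteq> S" "pathstart g = u" "pathfinish g = v"
    "curve_length g < ereal (dist u v + \<eta>)"
    unfolding INF_less_iff by blast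
  have "path_image g \<subseteq> ball u (dist u v + \<eta>)"
  proof
    fix z assume "z \<in> path_image g"
    then obtain t where t: "t \<in> {0..1}" "z = g t" by (auto simp: path_image_def)
    have "ereal (dist (g 0) (g t)) < ereal (dist u v + \<eta>)" by (rule le_less_trans[OF curve_length_ge[OF t(1), of g] g(5)])
    then show "z \<in> ball u (dist u v + \<eta>)" using g(3) t(2) by (simp add: pathstart_def)
  qed
  then show ?thesis using g by blast
qed

lemma length_space_ok:
  assumes "length_space S" "u \<in> S" "v \<in> S"
  shows "\<exists>c. ok S c u v"
  using length_space_short[OF assms zero_less_one] unfolding ok_def by blast

definition goodset :: "'a::metric_space set \<Rightarrow> ereal set" where
  "goodset S = {ereal r | r. r > 0 \<and> (\<forall>x\<in>S. \<forall>g. path g \<and> pathfinish g = pathstart g \<and>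
          path_image g \<subseteq> {z\<in>S. dist x z < r} \<longrightarrow> homotopic_loops S g (\<lambda>t. pathstart g))}"

lemma r_of_goodset: "r_of S = Sup (goodset S)"
  unfolding r_of_def goodset_def ..

lemma r_of_good:
  assumes "ereal \<rho> < r_of S"
  shows "good S \<rho>"
proof -
  have "\<exists>x\<in>goodset S. ereal \<rho> < x" using assms unfolding r_of_goodset by (simp only: less_Sup_iff)
  then obtain x where x: "x \<in> goodset S" "ereal \<rho> < x" by blast
  have "\<exists>r. x = ereal r \<and> r > 0 \<and> (\<forall>x\<in>S. \<forall>g. path g \<and> pathfinish g = pathstart g \<and>
          path_image g \<subseteq> {z\<in>S. dist x z < r} \<longrightarrow> homotopic_loops S g (\<lambda>t. pathstart g))"
    using x(1) unfolding goodset_def by (simp only: mem_Collect_eq)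
  then obtain r where r: "x = ereal r" "r > 0" "\<forall>x\<in>S. \<forall>g. path g \<and> pathfinish g = pathstart g \<and>
          path_image g \<subseteq> {z\<in>S. dist x z < r} \<longrightarrow> homotopic_loops S g (\<lambda>t. pathstart g)"
    by (elim exE conjE) (rule that)
  have "\<rho> < r" using x(2) r(1) by simp
  show ?thesis unfolding good_def
  proof (intro ballI allI impI)
    fix c g assume c: "c \<in> S" and g: "path g \<and> pathfinish g = pathstart g \<and> path_image g \<subseteq> S \<inter> ball c \<rho>"
    then have "path_image g \<subseteq> {z\<in>S. dist c z < r}" using \<open>\<rho> < r\<close> by auto
    then have "homotopic_loops S g (\<lambda>t. pathstart g)" using r(3) c g by blast
    then show "homotopic_loops S g (cp (pathstart g))" by (simp add: cp_def)
  qed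
qed

lemma r_of_pos:
  assumes "ereal x \<le> r_of S / 20"
  shows "0 < r_of S"
proof -
  have "goodset S \<noteq> {}"
  proof
    assume "goodset S = {}"
    then have "r_of S = -\<infinity>" unfolding r_of_goodset by (simp add: bot_ereal_def)
    then show False using assms by simp
  qed
  then obtain x where x: "x \<in> goodset S" by blast
  have "\<exists>r. x = ereal r \<and> r > 0 \<and> (\<forall>x\<in>S. \<forall>g. path g \<and> pathfinish g = pathstart g \<and>
          path_image g \<subseteq> {z\<in>S. dist x z < r} \<longrightarrow> homotopic_loops S g (\<lambda>t. pathstart g))"
    using x(1) unfolding goodset_def by (simp only: mem_Collect_eq)
  then obtain r where r: "x = ereal r" "r > 0" by (elim exE conjE) (rule that)
  have "x \<le> r_of S" unfolding r_of_goodset using x by (rule Sup_upper)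
  then show ?thesis using r by (metis ereal_less(2) less_le_trans)
qed

lemma ereal_between:
  assumes "0 < M" "ereal x \<le> M"
  shows "\<exists>s. 0 < s \<and> x \<le> s \<and> ereal s \<le> M"
proof (cases M)
  case (real m)
  then show ?thesis using assms by auto
next
  case PInf
  then show ?thesis by (intro exI[of _ "max x 1"]) auto
next
  case MInf
  then show ?thesis using assms by simp
qed

definition dd :: "'a::metric_space \<Rightarrow> 'b::metric_space \<Rightarrow> ('a + 'b) \<Rightarrow> ('a + 'b) \<Rightarrow> real" where
  "dd a0 b0 u v = (case u of Inl x \<Rightarrow> (case v of Inl x' \<Rightarrow> dist x x' | Inr y \<Rightarrow> dist x a0 + 1 + dist b0 y)
                        | Inr y \<Rightarrow> (case v of Inl x \<Rightarrow> dist x a0 + 1 + dist b0 y | Inr y' \<Rightarrow> dist y y'))"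

lemma dd_tri: "dd a0 b0 u w \<le> dd a0 b0 u v + dd a0 b0 v w"
  apply (cases u; cases v; cases w)
  apply (simp_all add: dd_def)
  apply (smt (verit) dist_triangle dist_commute dist_nz)+
  done

lemma dd_metric: "Metric_space M (dd a0 b0)"
proof
  show "0 \<le> dd a0 b0 x y" for x y by (cases x; cases y) (auto simp: dd_def)
  show "dd a0 b0 x y = dd a0 b0 y x" for x y by (cases x; cases y) (auto simp: dd_def dist_commute)
  show "dd a0 b0 x y = 0 \<longleftrightarrow> x = y" for x y
    by (cases x; cases y) (auto simp: dd_def add_nonneg_eq_0_iff)
  show "dd a0 b0 x z \<le> dd a0 b0 x y + dd a0 b0 y z" for x y z by (rule dd_tri)
qed

lemma GH_corr:
  fixes Y1 :: "'a::metric_space set" and Y2 :: "'b::metric_space set"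
  assumes "compact Y1" "compact Y2" "a0 \<in> Y1" "b0 \<in> Y2" "GH_dist Y1 Y2 < h"
  shows "\<exists>C. (\<forall>x\<in>Y1. \<exists>y\<in>Y2. C x y) \<and> (\<forall>y\<in>Y2. \<exists>x\<in>Y1. C x y) \<and>
    (\<forall>x x' y y'. C x y \<longrightarrow> C x' y' \<longrightarrow> x \<in> Y1 \<longrightarrow> x' \<in> Y1 \<longrightarrow> y \<in> Y2 \<longrightarrow> y' \<in> Y2 \<longrightarrow>
        dist y y' \<le> dist x x' + 2 * h \<and> dist x x' \<le> dist y y' + 2 * h)"
proof -
  let ?M = "Inl ` Y1 \<union> Inr ` Y2 :: ('a + 'b) set"
  define GS where "GS = {hausdorff_dist_wrt d (Inl ` Y1) (Inr ` Y2) | d.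
      Metric_space (Inl ` Y1 \<union> Inr ` Y2) d \<and>
      (\<forall>x\<in>Y1. \<forall>y\<in>Y1. d (Inl x) (Inl y) = dist x y) \<and>
      (\<forall>x\<in>Y2. \<forall>y\<in>Y2. d (Inr x) (Inr y) = dist x y)}"
  have "hausdorff_dist_wrt (dd a0 b0) (Inl ` Y1) (Inr ` Y2) \<in> GS"
    unfolding GS_def using dd_metric[of ?M a0 b0] by (auto simp: dd_def)
  then have GSne: "GS \<noteq> {}" by blast
  have "Inf GS < h" using assms(5) unfolding GH_dist_def GS_def .
  then obtain v where "v \<in> GS" "v < h" using cInf_lessD[OF GSne] by blast
  then obtain d where d: "Metric_space ?M d" "\<forall>x\<in>Y1. \<forall>y\<in>Y1. d (Inl x) (Inl y) = dist x y"
      "\<forall>x\<in>Y2. \<forall>y\<in>Y2. d (Inr x) (Inr y) = dist x y" "hausdorff_dist_wrt d (Inl ` Y1) (Inr ` Y2) < h"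
    unfolding GS_def by blast
  interpret MS: Metric_space ?M d by (rule d(1))
  define f1 where "f1 u = (INF w\<in>Inr ` Y2. d u w)" for u
  define f2 where "f2 w = (INF u\<in>Inl ` Y1. d u w)" for w
  have bb1: "bdd_below (d u ` (Inr ` Y2))" for u by (rule bdd_belowI[of _ 0]) auto
  have bb2: "bdd_below ((\<lambda>u. d u w) ` (Inl ` Y1))" for w by (rule bdd_belowI[of _ 0]) auto
  obtain R1 where R1: "\<forall>x\<in>Y1. dist a0 x \<le> R1" using compact_imp_bounded[OF assms(1)] bounded_any_center by blast
  obtain R2 where R2: "\<forall>y\<in>Y2. dist b0 y \<le> R2" using compact_imp_bounded[OF assms(2)] bounded_any_center by blast
  have ba1: "bdd_above (f1 ` (Inl ` Y1))"
  proof (rule bdd_aboveI[of _ "R1 + d (Inl a0) (Inr b0)"])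
    fix z assume "z \<in> f1 ` (Inl ` Y1)"
    then obtain x where x: "x \<in> Y1" "z = f1 (Inl x)" by auto
    have "f1 (Inl x) \<le> d (Inl x) (Inr b0)" unfolding f1_def by (rule cINF_lower[OF bb1]) (use assms(4) in auto)
    also have "\<dots> \<le> d (Inl x) (Inl a0) + d (Inl a0) (Inr b0)" by (rule MS.triangle) (use x assms in auto)
    also have "d (Inl x) (Inl a0) = dist x a0" using d(2) x assms(3) by auto
    also have "dist x a0 \<le> R1" using R1 x by (metis dist_commute)
    finally show "z \<le> R1 + d (Inl a0) (Inr b0)" using x by simp
  qed
  have ba2: "bdd_above (f2 ` (Inr ` Y2))"
  proof (rule bdd_aboveI[of _ "R2 + d (Inl a0) (Inr b0)"])
    fix z assume "z \<in> f2 ` (Inr ` Y2)"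
    then obtain y where y: "y \<in> Y2" "z = f2 (Inr y)" by auto
    have "f2 (Inr y) \<le> d (Inl a0) (Inr y)" unfolding f2_def by (rule cINF_lower[OF bb2]) (use assms(3) in auto)
    also have "\<dots> \<le> d (Inl a0) (Inr b0) + d (Inr b0) (Inr y)" by (rule MS.triangle) (use y assms in auto)
    also have "d (Inr b0) (Inr y) = dist b0 y" using d(3) y assms(4) by auto
    also have "dist b0 y \<le> R2" using R2 y by simp
    finally show "z \<le> R2 + d (Inl a0) (Inr b0)" using y by simp
  qed
  have hd: "hausdorff_dist_wrt d (Inl ` Y1) (Inr ` Y2) = max (SUP u\<in>Inl ` Y1. f1 u) (SUP w\<in>Inr ` Y2. f2 w)"
    unfolding hausdorff_dist_wrt_def f1_def f2_def ..
  have t1: "\<exists>y\<in>Y2. d (Inl x) (Inr y) < h" if x: "x \<in> Y1" for x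
  proof -
    have "f1 (Inl x) \<le> (SUP u\<in>Inl ` Y1. f1 u)" by (rule cSUP_upper[OF _ ba1]) (use x in auto)
    then have "f1 (Inl x) < h" using d(4) hd by linarith
    then have "Inf (d (Inl x) ` (Inr ` Y2)) < h" unfolding f1_def .
    then obtain z where "z \<in> d (Inl x) ` (Inr ` Y2)" "z < h" using cInf_lessD[of "d (Inl x) ` (Inr ` Y2)"] assms(4) by blast
    then show ?thesis by auto
  qed
  have t2: "\<exists>x\<in>Y1. d (Inl x) (Inr y) < h" if y: "y \<in> Y2" for y
  proof -
    have "f2 (Inr y) \<le> (SUP w\<in>Inr ` Y2. f2 w)" by (rule cSUP_upper[OF _ ba2]) (use y in auto)
    then have "f2 (Inr y) < h" using d(4) hd by linarith
    then have "Inf ((\<lambda>u. d u (Inr y)) ` (Inl ` Y1)) < h" unfolding f2_def .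
    then obtain z where "z \<in> (\<lambda>u. d u (Inr y)) ` (Inl ` Y1)" "z < h"
      using cInf_lessD[of "(\<lambda>u. d u (Inr y)) ` (Inl ` Y1)"] assms(3) by blast
    then show ?thesis by auto
  qed
  have dist: "dist y y' \<le> dist x x' + 2 * h \<and> dist x x' \<le> dist y y' + 2 * h"
    if "d (Inl x) (Inr y) < h" "d (Inl x') (Inr y') < h" "x \<in> Y1" "x' \<in> Y1" "y \<in> Y2" "y' \<in> Y2" for x x' y y'
  proof -
    have i1: "Inl x \<in> ?M" "Inl x' \<in> ?M" "Inr y \<in> ?M" "Inr y' \<in> ?M" using that by auto
    have "d (Inr y) (Inr y') \<le> d (Inr y) (Inl x) + d (Inl x) (Inr y')" by (rule MS.triangle) (use i1 in auto)
    also have "d (Inl x) (Inr y') \<le> d (Inl x) (Inl x') + d (Inl x') (Inr y')" by (rule MS.triangle) (use i1 in auto)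
    finally have A: "d (Inr y) (Inr y') \<le> d (Inr y) (Inl x) + (d (Inl x) (Inl x') + d (Inl x') (Inr y'))" by simp
    have "d (Inl x) (Inl x') \<le> d (Inl x) (Inr y) + d (Inr y) (Inl x')" by (rule MS.triangle) (use i1 in auto)
    also have "d (Inr y) (Inl x') \<le> d (Inr y) (Inr y') + d (Inr y') (Inl x')" by (rule MS.triangle) (use i1 in auto)
    finally have B: "d (Inl x) (Inl x') \<le> d (Inl x) (Inr y) + (d (Inr y) (Inr y') + d (Inr y') (Inl x'))" by simp
    have c: "d (Inr y) (Inl x) = d (Inl x) (Inr y)" "d (Inr y') (Inl x') = d (Inl x') (Inr y')" using MS.commute by auto
    have e: "d (Inr y) (Inr y') = dist y y'" "d (Inl x) (Inl x') = dist x x'" using d(2,3) that by auto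
    show ?thesis using A B c e that(1,2) by linarith
  qed
  show ?thesis
    by (rule exI[of _ "\<lambda>x y. d (Inl x) (Inr y) < h"]) (use t1 t2 dist in blast)
qed

lemma ereal_div20:
  assumes "ereal g \<le> R / 20"
  shows "ereal (20 * g) \<le> R"
proof (cases R)
  case (real r)
  then show ?thesis using assms by simp
qed (use assms in auto)

theorem corollary2p3:
  fixes Y1 :: "'a::metric_space set" and Y2 :: "'b::metric_space set"
  assumes "compact Y1" "semilocally_simply_connected Y1" "length_space Y1"
      and "compact Y2" "semilocally_simply_connected Y2" "length_space Y2"
      and "ereal (GH_dist Y1 Y2) \<le> min (r_of Y1 / 20) (r_of Y2 / 20)"
  shows "\<forall>a\<in>Y1. \<forall>b\<in>Y2. fundamental_group Y1 a \<cong> fundamental_group Y2 b"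
proof (intro ballI)
  fix a b assume a: "a \<in> Y1" and b: "b \<in> Y2"
  define g where "g = GH_dist Y1 Y2"
  have h1: "ereal g \<le> r_of Y1 / 20" "ereal g \<le> r_of Y2 / 20" using assms(7) unfolding g_def by auto
  have p1: "0 < r_of Y1" "0 < r_of Y2" using r_of_pos[OF h1(1)] r_of_pos[OF h1(2)] by auto
  have m: "ereal (20 * g) \<le> min (r_of Y1) (r_of Y2)" using ereal_div20[OF h1(1)] ereal_div20[OF h1(2)] by simp
  have p2: "0 < min (r_of Y1) (r_of Y2)" using p1 by simp
  obtain s where s: "0 < s" "20 * g \<le> s" "ereal s \<le> min (r_of Y1) (r_of Y2)"
    using ereal_between[OF p2 m] by blast
  define h where "h = max g 0 + s / 100"
  define \<eta> where "\<eta> = s / 100"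
  define \<rho> where "\<rho> = s / 2"
  define e where "e = 2 * h"
  have mg: "max g 0 \<le> s / 20" using s by simp
  have gh: "GH_dist Y1 Y2 < h" unfolding h_def g_def[symmetric] using s(1) by simp
  have rs: "ereal \<rho> < ereal s" unfolding \<rho>_def using s(1) by simp
  have good1: "good Y1 \<rho>" using r_of_good[of \<rho> Y1] rs s(3) by (meson le_less_trans min.boundedE not_less)
  have good2: "good Y2 \<rho>" using r_of_good[of \<rho> Y2] rs s(3) by (meson le_less_trans min.boundedE not_less)
  have par: "0 < \<eta>" "0 \<le> e" "3 * e + 4 * \<eta> < \<rho>"
    using s(1) mg unfolding \<eta>_def e_def h_def \<rho>_def by auto
  obtain C where C: "\<forall>x\<in>Y1. \<exists>y\<in>Y2. C x y" "\<forall>y\<in>Y2. \<exists>x\<in>Y1. C x y"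
    "\<forall>x x' y y'. C x y \<longrightarrow> C x' y' \<longrightarrow> x \<in> Y1 \<longrightarrow> x' \<in> Y1 \<longrightarrow> y \<in> Y2 \<longrightarrow> y' \<in> Y2 \<longrightarrow>
        dist y y' \<le> dist x x' + 2 * h \<and> dist x x' \<le> dist y y' + 2 * h"
    using GH_corr[OF assms(1,4) a b gh] by blast
  define C' where "C' x y = (x \<in> Y1 \<and> y \<in> Y2 \<and> C x y)" for x y
  obtain b' where b': "b' \<in> Y2" "C a b'" using C(1) a by blast
  have c1: "corr Y1 Y2 C' e \<eta> \<rho> a b'"
  proof (unfold corr_def, intro conjI allI impI)
    show "dist y y' \<le> dist x x' + e" if "C' x y" "C' x' y'" "x \<in> Y1" "x' \<in> Y1" "y \<in> Y2" "y' \<in> Y2" for x x' y y'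
      using C(3) that unfolding C'_def e_def by blast
    show "\<exists>y\<in>Y2. C' x y" if "x \<in> Y1" for x using C(1) that unfolding C'_def by blast
    show "\<exists>q. path q \<and> path_image q \<subseteq> Y2 \<and> path_image q \<subseteq> ball u (dist u v + \<eta>) \<and> pathstart q = u \<and> pathfinish q = v"
      if "u \<in> Y2" "v \<in> Y2" for u v using length_space_short[OF assms(6) that par(1)] .
  qed (use a b' good2 par in \<open>auto simp: C'_def\<close>)
  have c2: "corr Y2 Y1 (\<lambda>y x. C' x y) e \<eta> \<rho> b' a"
  proof (unfold corr_def, intro conjI allI impI)
    show "dist x x' \<le> dist y y' + e" if "C' x y" "C' x' y'" "y \<in> Y2" "y' \<in> Y2" "x \<in> Y1" "x' \<in> Y1" for x x' y y'
      using C(3) that unfolding C'_def e_def by blast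
    show "\<exists>x\<in>Y1. C' x y" if "y \<in> Y2" for y using C(2) that unfolding C'_def by blast
    show "\<exists>q. path q \<and> path_image q \<subseteq> Y1 \<and> path_image q \<subseteq> ball u (dist u v + \<eta>) \<and> pathstart q = u \<and> pathfinish q = v"
      if "u \<in> Y1" "v \<in> Y1" for u v using length_space_short[OF assms(3) that par(1)] .
  qed (use a b' good1 par in \<open>auto simp: C'_def\<close>)
  interpret F: corr Y1 Y2 C' e \<eta> \<rho> a b' by (rule c1)
  interpret B: corr Y2 Y1 "\<lambda>y x. C' x y" e \<eta> \<rho> b' a by (rule c2)
  have cc: "corr2 Y1 Y2 C' e \<eta> \<rho> \<rho> a b'" unfolding corr2_def using c1 c2 by simp
  have cc': "corr2 Y2 Y1 (\<lambda>y x. C' x y) e \<eta> \<rho> \<rho> b' a" unfolding corr2_def using c1 c2 by simp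
  have okX: "ok Y1 p a a \<longleftrightarrow> F.lpX p" for p unfolding ok_def F.lpX_def by auto
  have okY: "ok Y2 q b' b' \<longleftrightarrow> B.lpX q" for q unfolding ok_def B.lpX_def by auto
  have iso1: "fundamental_group Y1 a \<cong> fundamental_group Y2 b'"
  proof (rule iso_from_maps[where F = F.Phi and G = B.Phi])
    show "ok Y2 (F.Phi p) b' b'" if "ok Y1 p a a" for p
    proof -
      have l: "F.lpX p" using that okX by simp
      show ?thesis using F.Phi_loop[OF l] unfolding ok_def by auto
    qed
    show "homotopic_paths Y2 (F.Phi p) (F.Phi p')" if "ok Y1 p a a" "ok Y1 p' a a" "homotopic_paths Y1 p p'" for p p'
      using F.Phi_cong that unfolding okX by blast
    show "homotopic_paths Y2 (F.Phi (p +++ p')) (F.Phi p +++ F.Phi p')" if "ok Y1 p a a" "ok Y1 p' a a" for p p'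
      using F.Phi_join that unfolding okX by blast
    show "ok Y1 (B.Phi q) a a" if "ok Y2 q b' b'" for q
    proof -
      have l: "B.lpX q" using that okY by simp
      show ?thesis using B.Phi_loop[OF l] unfolding ok_def by auto
    qed
    show "homotopic_paths Y1 (B.Phi q) (B.Phi q')" if "ok Y2 q b' b'" "ok Y2 q' b' b'" "homotopic_paths Y2 q q'" for q q'
      using B.Phi_cong that unfolding okY by blast
    show "homotopic_paths Y1 (B.Phi (F.Phi p)) p" if "ok Y1 p a a" for p
      using corr2.GF[OF cc] that unfolding okX by blast
    show "homotopic_paths Y2 (F.Phi (B.Phi q)) q" if "ok Y2 q b' b'" for q
      using corr2.GF[OF cc'] that unfolding okY by blast
  qed
  obtain c where "ok Y2 c b' b" using length_space_ok[OF assms(6) b'(1) b] by blast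
  then have iso2: "fundamental_group Y2 b' \<cong> fundamental_group Y2 b" by (rule basepoint_iso)
  show "fundamental_group Y1 a \<cong> fundamental_group Y2 b" using iso_trans[OF iso1 iso2] .
qed

end
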